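(* Let $G$ be a connected graph of order $n\geq 5$ and let $k$ be an integer with $3\leq k\leq n$. Then $px_k(G)=n-2$ if and only if $G\cong S_n^+$ or $G\cong G_0$, where $S_n^+$ is the graph obtained from the star $S_n=K_{1,n-1}$ by adding one edge joining two of its leaves, and $G_0$ is the tree on $n$ vertices obtained from the star $K_{1,n-2}$ by attaching one new pendant vertex to one of its leaves (equivalently, obtained from $K_{1,n-1}$ by subdividing one edge once and deleting a leaf; it is the unique tree on $n$ vertices with maximum degree $n-2$).
   Context: All graphs are finite, simple, undirected and connected. An edge-coloring of a graph assigns a color to each edge (adjacent edges may receive the same color). A tree in an edge-colored graph is proper if any two adjacent edges of the tree receive different colors. For $S\subseteq V(G)$, an $S$-tree is a subgraph of $G$ that is a tree containing all vertices of $S$. For a connected graph $G$ of order $n$ and an integer $k$ with $2\le k\le n$, an edge-coloring of $G$ is a $k$-proper coloring if for every set $S$ of $k$ vertices of $G$ there exists a proper $S$-tree in $G$. The $k$-proper index $px_k(G)$ is the minimum number of colors used in a $k$-proper coloring of $G$. *)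

theory Defs
  imports Main
begin

definition simple_graph :: "'a set \<Rightarrow> 'a set set \<Rightarrow> bool" where
  "simple_graph V E \<longleftrightarrow> finite V \<and>
     (\<forall>e\<in>E. \<exists>u v. u \<noteq> v \<and> e = {u, v} \<and> u \<in> V \<and> v \<in> V)"

definition connected_graph :: "'a set \<Rightarrow> 'a set set \<Rightarrow> bool" where
  "connected_graph V E \<longleftrightarrow> V \<noteq> {} \<and>
     (\<forall>u\<in>V. \<forall>v\<in>V. (\<lambda>x y. {x, y} \<in> E)\<^sup>*\<^sup>* u v)"

definition has_cycle :: "'a set \<Rightarrow> 'a set set \<Rightarrow> bool" where
  "has_cycle V E \<longleftrightarrow> (\<exists>xs. length xs \<ge> 3 \<and> distinct xs \<and> set xs \<subseteq> V \<and>
     (\<forall>i. Suc i < length xs \<longrightarrow> {xs ! i, xs ! Suc i} \<in> E) \<and>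
     {last xs, hd xs} \<in> E)"

definition is_tree :: "'a set \<Rightarrow> 'a set set \<Rightarrow> bool" where
  "is_tree V E \<longleftrightarrow> simple_graph V E \<and> connected_graph V E \<and> \<not> has_cycle V E"

definition subgraph :: "'a set \<Rightarrow> 'a set set \<Rightarrow> 'a set \<Rightarrow> 'a set set \<Rightarrow> bool" where
  "subgraph VT ET V E \<longleftrightarrow> VT \<subseteq> V \<and> ET \<subseteq> E \<and> (\<forall>e\<in>ET. e \<subseteq> VT)"

definition proper_edges :: "('a set \<Rightarrow> 'c) \<Rightarrow> 'a set set \<Rightarrow> bool" where
  "proper_edges c ET \<longleftrightarrow> (\<forall>e\<in>ET. \<forall>f\<in>ET. e \<noteq> f \<and> e \<inter> f \<noteq> {} \<longrightarrow> c e \<noteq> c f)"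

definition proper_S_tree_exists ::
  "'a set \<Rightarrow> 'a set set \<Rightarrow> ('a set \<Rightarrow> 'c) \<Rightarrow> 'a set \<Rightarrow> bool" where
  "proper_S_tree_exists V E c S \<longleftrightarrow>
     (\<exists>VT ET. subgraph VT ET V E \<and> is_tree VT ET \<and> S \<subseteq> VT \<and> proper_edges c ET)"

definition k_proper_coloring :: "nat \<Rightarrow> 'a set \<Rightarrow> 'a set set \<Rightarrow> ('a set \<Rightarrow> nat) \<Rightarrow> bool" where
  "k_proper_coloring k V E c \<longleftrightarrow>
     (\<forall>S. S \<subseteq> V \<and> card S = k \<longrightarrow> proper_S_tree_exists V E c S)"

definition px :: "nat \<Rightarrow> 'a set \<Rightarrow> 'a set set \<Rightarrow> nat" where
  "px k V E = (LEAST m. \<exists>c. k_proper_coloring k V E c \<and> card (c ` E) = m)"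

definition graph_iso :: "'a set \<Rightarrow> 'a set set \<Rightarrow> 'b set \<Rightarrow> 'b set set \<Rightarrow> bool" where
  "graph_iso V E V' E' \<longleftrightarrow> (\<exists>f. bij_betw f V V' \<and>
     (\<forall>u\<in>V. \<forall>v\<in>V. {u, v} \<in> E \<longleftrightarrow> {f u, f v} \<in> E'))"

definition Splus_edges :: "nat \<Rightarrow> nat set set" where
  "Splus_edges n = {{0, i} | i. i \<in> {1..<n}} \<union> {{1, 2}}"

definition G0_edges :: "nat \<Rightarrow> nat set set" where
  "G0_edges n = {{0, i} | i. i \<in> {1..<n-1}} \<union> {{n-2, n-1}}"

end

theory Submission
  imports Defs
begin


inductive tr :: "'a set \<Rightarrow> 'a set set \<Rightarrow> bool" where
  tr_single: "tr {v} {}"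
| tr_add: "tr V E \<Longrightarrow> u \<in> V \<Longrightarrow> w \<notin> V \<Longrightarrow> tr (insert w V) (insert {u,w} E)"

lemma tr_basic: "tr V E \<Longrightarrow> finite V \<and> V \<noteq> {} \<and> finite E \<and>
   (\<forall>e\<in>E. \<exists>u v. u \<noteq> v \<and> e = {u,v} \<and> u \<in> V \<and> v \<in> V)"
proof (induction rule: tr.induct)
  case (tr_single v) thus ?case by simp
next
  case (tr_add V E u w)
  have "u \<noteq> w" using tr_add.hyps by blast
  hence "\<exists>a b. a \<noteq> b \<and> {u,w} = {a,b} \<and> a \<in> insert w V \<and> b \<in> insert w V"
    using tr_add.hyps by blast
  moreover have "\<forall>e\<in>E. \<exists>a b. a \<noteq> b \<and> e = {a,b} \<and> a \<in> insert w V \<and> b \<in> insert w V"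
    using tr_add.IH by blast
  ultimately show ?case using tr_add.IH by simp
qed

lemma tr_edge_sub: "tr V E \<Longrightarrow> e \<in> E \<Longrightarrow> e \<subseteq> V"
proof -
  assume "tr V E" "e \<in> E"
  then obtain a b where "e = {a,b}" "a \<in> V" "b \<in> V" using tr_basic by metis
  thus ?thesis by simp
qed

lemma tr_conn: "tr V E \<Longrightarrow> connected_graph V E"
proof (induction rule: tr.induct)
  case (tr_single v) thus ?case by (simp add: connected_graph_def)
next
  case (tr_add V E u w)
  let ?R = "\<lambda>x y. {x,y} \<in> E" and ?R' = "\<lambda>x y. {x,y} \<in> insert {u,w} E"
  have mono: "?R\<^sup>*\<^sup>* a b \<Longrightarrow> ?R'\<^sup>*\<^sup>* a b" for a b
    by (rule mono_rtranclp[rule_format, of ?R ?R']) auto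
  have old: "a \<in> V \<Longrightarrow> b \<in> V \<Longrightarrow> ?R'\<^sup>*\<^sup>* a b" for a b
    using tr_add.IH mono unfolding connected_graph_def by blast
  have wu: "?R' w u" by (simp add: insert_commute)
  have uw: "?R' u w" by simp
  have "a \<in> insert w V \<Longrightarrow> b \<in> insert w V \<Longrightarrow> ?R'\<^sup>*\<^sup>* a b" for a b
  proof -
    assume a: "a \<in> insert w V" and b: "b \<in> insert w V"
    show ?thesis
    proof (cases "a = w")
      case True
      show ?thesis
      proof (cases "b = w")
        case True thus ?thesis using \<open>a = w\<close> by simp
      next
        case False
        hence "?R'\<^sup>*\<^sup>* u b" using old b tr_add.hyps by blast
        thus ?thesis using wu \<open>a = w\<close> by (simp add: converse_rtranclp_into_rtranclp)
      qed
    next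
      case False
      hence aV: "a \<in> V" using a by blast
      show ?thesis
      proof (cases "b = w")
        case True
        have "?R'\<^sup>*\<^sup>* a u" using old aV tr_add.hyps by blast
        thus ?thesis using uw True by (simp add: rtranclp.rtrancl_into_rtrancl)
      next
        case False thus ?thesis using old aV b by blast
      qed
    qed
  qed
  thus ?case unfolding connected_graph_def by blast
qed

lemma cycle_two_nbrs:
  assumes L: "length xs \<ge> 3" and d: "distinct xs"
  and ed: "\<forall>i. Suc i < length xs \<longrightarrow> {xs ! i, xs ! Suc i} \<in> E"
  and el: "{last xs, hd xs} \<in> E" and x: "x \<in> set xs"
  shows "\<exists>a b. a \<noteq> b \<and> a \<noteq> x \<and> b \<noteq> x \<and> {x,a} \<in> E \<and> {b,x} \<in> E"
proof -
  obtain j where j: "j < length xs" "xs ! j = x" using x by (auto simp: in_set_conv_nth)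
  define ni where "ni = (if Suc j < length xs then Suc j else 0)"
  define pj where "pj = (if j > 0 then j - 1 else length xs - 1)"
  have ni: "ni < length xs" "ni \<noteq> j" using L j unfolding ni_def by auto
  have pj: "pj < length xs" "pj \<noteq> j" using L j unfolding pj_def by auto
  have np: "ni \<noteq> pj" using L j unfolding ni_def pj_def by auto
  have e1: "{x, xs ! ni} \<in> E"
  proof (cases "Suc j < length xs")
    case True thus ?thesis using ed j unfolding ni_def by auto
  next
    case False hence "j = length xs - 1" using j by auto
    moreover have "xs \<noteq> []" using L by auto
    ultimately have "last xs = x" using j by (simp add: last_conv_nth)
    moreover have "hd xs = xs ! 0" using \<open>xs \<noteq> []\<close> by (simp add: hd_conv_nth)
    ultimately show ?thesis using el False unfolding ni_def by simp
  qed
  have e2: "{xs ! pj, x} \<in> E"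
  proof (cases "j > 0")
    case True then have "Suc (j-1) = j" by simp
    thus ?thesis using ed[rule_format, of "j-1"] j True unfolding pj_def by auto
  next
    case False hence "j = 0" by simp
    thus ?thesis using el L j by (simp add: last_conv_nth hd_conv_nth pj_def)
  qed
  have "xs!ni \<noteq> xs!j" "xs!pj \<noteq> xs!j" "xs!ni \<noteq> xs!pj"
    using d ni pj np j(1) by (simp_all add: nth_eq_iff_index_eq)
  thus ?thesis using e1 e2 j(2) by blast
qed

lemma tr_acyclic: "tr V E \<Longrightarrow> \<not> has_cycle V E"
proof (induction rule: tr.induct)
  case (tr_single v) thus ?case by (simp add: has_cycle_def)
next
  case (tr_add V E u w)
  have wnot: "\<And>e. e \<in> E \<Longrightarrow> w \<notin> e" using tr_edge_sub[OF tr_add.hyps(1)] tr_add.hyps(3) by blast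
  show ?case
  proof
    assume "has_cycle (insert w V) (insert {u, w} E)"
    then obtain xs where L: "length xs \<ge> 3" and d: "distinct xs" and s: "set xs \<subseteq> insert w V"
      and ed: "\<forall>i. Suc i < length xs \<longrightarrow> {xs ! i, xs ! Suc i} \<in> insert {u, w} E"
      and el: "{last xs, hd xs} \<in> insert {u, w} E" unfolding has_cycle_def by blast
    show False
    proof (cases "w \<in> set xs")
      case True
      from cycle_two_nbrs[OF L d ed el True] obtain a b where ab: "a \<noteq> b" "a \<noteq> w" "b \<noteq> w"
        "{w,a} \<in> insert {u, w} E" "{b,w} \<in> insert {u, w} E" by blast
      have "{w,a} = {u,w}" using ab wnot by blast
      hence "a = u" using ab by (auto simp: doubleton_eq_iff)
      moreover have "{b,w} = {u,w}" using ab wnot by blast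
      hence "b = u" using ab by (auto simp: doubleton_eq_iff)
      ultimately show False using ab by simp
    next
      case False
      have "\<forall>i. Suc i < length xs \<longrightarrow> {xs ! i, xs ! Suc i} \<in> E"
      proof (intro allI impI)
        fix i assume i: "Suc i < length xs"
        have "xs ! i \<noteq> w" "xs ! Suc i \<noteq> w" using False i nth_mem
          by (metis Suc_lessD)+
        hence "w \<notin> {xs ! i, xs ! Suc i}" by simp
        moreover have "{xs ! i, xs ! Suc i} = {u,w} \<or> {xs ! i, xs ! Suc i} \<in> E" using ed i by auto
        ultimately show "{xs ! i, xs ! Suc i} \<in> E" by blast
      qed
      moreover have "{last xs, hd xs} \<in> E"
      proof -
        have "xs \<noteq> []" using L by auto
        hence "last xs \<noteq> w" "hd xs \<noteq> w" using False by auto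
        thus ?thesis using el by (auto simp: doubleton_eq_iff)
      qed
      moreover have "set xs \<subseteq> V" using s False by auto
      ultimately have "has_cycle V E" using L d unfolding has_cycle_def by blast
      thus False using tr_add.IH by simp
    qed
  qed
qed

lemma tr_is_tree: "tr V E \<Longrightarrow> is_tree V E"
proof -
  assume t: "tr V E"
  have "simple_graph V E" unfolding simple_graph_def using tr_basic[OF t] by simp
  thus ?thesis unfolding is_tree_def using tr_conn[OF t] tr_acyclic[OF t] by simp
qed


lemma tr_color:
  "tr V E \<Longrightarrow> (\<forall>v. card {e\<in>E. v\<in>e} \<le> D) \<Longrightarrow> \<exists>c::'a set \<Rightarrow> nat. proper_edges c E \<and> c ` E \<subseteq> {..<D}"
proof (induction rule: tr.induct)
  case (tr_single v) show ?case by (simp add: proper_edges_def)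
next
  case (tr_add V E u w)
  have fin: "finite E" using tr_basic[OF tr_add.hyps(1)] by simp
  have wnot: "\<And>f. f\<in>E \<Longrightarrow> w \<notin> f" using tr_edge_sub[OF tr_add.hyps(1)] tr_add.hyps(3) by blast
  have notin: "{u,w} \<notin> E" using wnot by blast
  have "\<forall>v. card {e\<in>E. v\<in>e} \<le> D"
  proof
    fix v
    have "card {e\<in>E. v\<in>e} \<le> card {e\<in>insert {u,w} E. v\<in>e}" by (rule card_mono) (use fin in auto)
    thus "card {e\<in>E. v\<in>e} \<le> D" using tr_add.prems[rule_format, of v] by linarith
  qed
  then obtain c :: "'a set \<Rightarrow> nat" where c: "proper_edges c E" "c ` E \<subseteq> {..<D}" using tr_add.IH by blast
  define Cu where "Cu = {e\<in>E. u\<in>e}"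
  have "{e\<in>insert {u,w} E. u\<in>e} = insert {u,w} Cu" unfolding Cu_def by auto
  hence "card (insert {u,w} Cu) \<le> D" using tr_add.prems by metis
  moreover have fC: "finite Cu" "{u,w} \<notin> Cu" using fin notin unfolding Cu_def by auto
  ultimately have "card Cu < D" by simp
  hence cc: "card (c ` Cu) < D" using card_image_le[OF fC(1), of c] by linarith
  have "\<not> {..<D} \<subseteq> c ` Cu"
  proof
    assume "{..<D} \<subseteq> c ` Cu"
    hence "card {..<D} \<le> card (c ` Cu)" by (intro card_mono) (use fC(1) in auto)
    thus False using cc by simp
  qed
  then obtain \<alpha> where al: "\<alpha> < D" "\<alpha> \<notin> c ` Cu" by blast
  define c' where "c' = c({u,w} := \<alpha>)"
  have "proper_edges c' (insert {u,w} E)"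
    unfolding proper_edges_def
  proof (intro ballI impI)
    fix e f assume e: "e \<in> insert {u,w} E" and f: "f \<in> insert {u,w} E" and ef: "e \<noteq> f \<and> e \<inter> f \<noteq> {}"
    show "c' e \<noteq> c' f"
    proof (cases "e = {u,w}")
      case True
      hence fE: "f \<in> E" "f \<noteq> {u,w}" using f ef by auto
      have "u \<in> f" using ef True wnot[OF fE(1)] by blast
      hence "c f \<in> c ` Cu" using fE unfolding Cu_def by blast
      moreover have "c' f = c f" "c' e = \<alpha>" using fE True unfolding c'_def by auto
      ultimately show ?thesis using al by auto
    next
      case False
      hence eE: "e \<in> E" using e by auto
      show ?thesis
      proof (cases "f = {u,w}")
        case True
        have "u \<in> e" using ef True wnot[OF eE] by blast
        hence "c e \<in> c ` Cu" using eE unfolding Cu_def by blast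
        moreover have "c' e = c e" "c' f = \<alpha>" using False True unfolding c'_def by auto
        ultimately show ?thesis using al by auto
      next
        case False2: False
        hence "f \<in> E" using f by auto
        thus ?thesis using c(1) eE ef False False2 unfolding proper_edges_def c'_def by auto
      qed
    qed
  qed
  moreover have "c' ` insert {u,w} E \<subseteq> {..<D}" using c al notin unfolding c'_def by auto
  ultimately show ?case by blast
qed

lemma rtranclp_cross: "R\<^sup>*\<^sup>* x y \<Longrightarrow> x \<in> A \<Longrightarrow> y \<notin> A \<Longrightarrow> \<exists>a b. R a b \<and> a \<in> A \<and> b \<notin> A"
  by (induction rule: rtranclp_induct) auto

lemma simple_edge: "simple_graph V E \<Longrightarrow> {a,b} \<in> E \<Longrightarrow> a \<in> V \<and> b \<in> V \<and> a \<noteq> b"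
proof -
  assume "simple_graph V E" "{a,b} \<in> E"
  then obtain u v where "u \<noteq> v" "{a,b} = {u,v}" "u \<in> V" "v \<in> V" unfolding simple_graph_def by blast
  thus ?thesis by (auto simp: doubleton_eq_iff)
qed

lemma extend_tree:
  assumes sg: "simple_graph V E" and cg: "connected_graph V E"
  shows "tr VT ET \<Longrightarrow> VS \<subseteq> VT \<Longrightarrow> VT \<subseteq> V \<Longrightarrow> ES \<subseteq> ET \<Longrightarrow> ET \<subseteq> E \<Longrightarrow>
    \<forall>e\<in>ET-ES. \<not> e \<subseteq> VS \<Longrightarrow>
    \<forall>w\<in>V-VS. \<forall>a\<in>VS. \<forall>b\<in>VS. {a,w}\<in>ET \<longrightarrow> {b,w}\<in>ET \<longrightarrow> a=b \<Longrightarrow>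
    \<exists>ET'. tr V ET' \<and> ES \<subseteq> ET' \<and> ET' \<subseteq> E \<and> (\<forall>e\<in>ET'-ES. \<not> e \<subseteq> VS) \<and>
      (\<forall>w\<in>V-VS. \<forall>a\<in>VS. \<forall>b\<in>VS. {a,w}\<in>ET' \<longrightarrow> {b,w}\<in>ET' \<longrightarrow> a=b)"
proof (induction "card (V - VT)" arbitrary: VT ET rule: less_induct)
  case less
  have finV: "finite V" using sg simple_graph_def by blast
  show ?case
  proof (cases "VT = V")
    case True thus ?thesis using less.prems by blast
  next
    case False
    then obtain y where y: "y\<in>V" "y\<notin>VT" using less.prems(3) by blast
    obtain x where x: "x\<in>VT" using tr_basic[OF less.prems(1)] by blast
    have "(\<lambda>a b. {a,b}\<in>E)\<^sup>*\<^sup>* x y" using cg x y less.prems(3) unfolding connected_graph_def by blast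
    from rtranclp_cross[OF this x y(2)] obtain a b where ab: "{a,b}\<in>E" "a\<in>VT" "b\<notin>VT" by blast
    have bV: "b\<in>V" using simple_edge[OF sg ab(1)] by blast
    let ?VT = "insert b VT" and ?ET = "insert {a,b} ET"
    have t: "tr ?VT ?ET" by (rule tr_add[OF less.prems(1) ab(2) ab(3)])
    have lt: "card (V - ?VT) < card (V - VT)" using finV bV ab(3) by (intro psubset_card_mono) auto
    have etsub: "\<And>e. e\<in>ET \<Longrightarrow> e \<subseteq> VT" using tr_edge_sub[OF less.prems(1)] .
    have i1: "\<forall>e\<in>?ET-ES. \<not> e \<subseteq> VS" using less.prems(6) less.prems(2) ab(3) by auto
    have i2: "\<forall>w\<in>V-VS. \<forall>a'\<in>VS. \<forall>b'\<in>VS. {a',w}\<in>?ET \<longrightarrow> {b',w}\<in>?ET \<longrightarrow> a'=b'"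
    proof (intro ballI impI)
      fix w a' b' assume w: "w\<in>V-VS" and a': "a'\<in>VS" and b': "b'\<in>VS" and e1: "{a',w}\<in>?ET" and e2: "{b',w}\<in>?ET"
      have a'T: "a'\<in>VT" "b'\<in>VT" using a' b' less.prems(2) by auto
      show "a' = b'"
      proof (cases "w = b")
        case True
        have "{a',w} \<notin> ET" using etsub True ab(3) by blast
        hence "{a',w} = {a,b}" using e1 by simp
        hence 1: "a' = a" using True a'T ab(3) by (auto simp: doubleton_eq_iff)
        have "{b',w} \<notin> ET" using etsub True ab(3) by blast
        hence "{b',w} = {a,b}" using e2 by simp
        hence "b' = a" using True a'T ab(3) by (auto simp: doubleton_eq_iff)
        thus ?thesis using 1 by simp
      next
        case False
        have "{a',w} \<noteq> {a,b}" "{b',w} \<noteq> {a,b}" using False a'T ab(3) by (auto simp: doubleton_eq_iff)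
        hence "{a',w} \<in> ET" "{b',w} \<in> ET" using e1 e2 by auto
        thus ?thesis using less.prems(7) w a' b' by blast
      qed
    qed
    have "VS \<subseteq> ?VT" "?VT \<subseteq> V" "ES \<subseteq> ?ET" "?ET \<subseteq> E" using less.prems ab bV by auto
    from less.hyps[OF lt t this i1 i2] show ?thesis .
  qed
qed

lemma deg_bound:
  assumes ed: "\<forall>e\<in>ET. \<exists>a b. a \<noteq> b \<and> e={a,b} \<and> a\<in>V \<and> b\<in>V" and fin: "finite V" and v: "v\<in>V"
    and N: "N \<subseteq> V" "v\<notin>N" and nn: "\<forall>x\<in>N. {v,x}\<notin>ET"
  shows "card {e\<in>ET. v\<in>e} \<le> card V - 1 - card N"
proof -
  have "{e\<in>ET. v\<in>e} \<subseteq> (\<lambda>x. {v,x}) ` (V - insert v N)"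
  proof
    fix e assume e: "e \<in> {e\<in>ET. v\<in>e}"
    then obtain a b where ab: "a \<noteq> b" "e={a,b}" "a\<in>V" "b\<in>V" using ed by blast
    have "\<exists>x. e = {v,x} \<and> x \<in> V \<and> x \<noteq> v" using e ab by (auto simp: insert_commute)
    then obtain x where x: "e={v,x}" "x\<in>V" "x \<noteq> v" by blast
    have "x \<notin> N" using nn e x by auto
    thus "e \<in> (\<lambda>x. {v,x}) ` (V - insert v N)" using x by auto
  qed
  hence "card {e\<in>ET. v\<in>e} \<le> card ((\<lambda>x. {v,x}) ` (V - insert v N))" by (rule card_mono[rotated]) (use fin in auto)
  also have "\<dots> \<le> card (V - insert v N)" by (rule card_image_le) (use fin in auto)
  also have "\<dots> = card V - card (insert v N)" using N v fin by (subst card_Diff_subset) (auto intro: finite_subset)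
  also have "card (insert v N) = card N + 1" using N fin by (simp add: finite_subset)
  finally show ?thesis by simp
qed

lemma seed_bound:
  assumes sg: "simple_graph V E" and cg: "connected_graph V E" and n: "card V = n"
  and t: "tr VS ES" and VS: "VS \<subseteq> V" and ES: "ES \<subseteq> E" and cs: "m + 1 \<le> card VS" and mn: "m + 1 < n"
  and nn: "\<forall>v\<in>VS. \<exists>N. N \<subseteq> VS \<and> v \<notin> N \<and> m \<le> card N \<and> (\<forall>x\<in>N. {v,x} \<notin> ES)"
  shows "\<exists>c. k_proper_coloring k V E c \<and> card (c ` E) \<le> n - 1 - m"
proof -
  have finV: "finite V" using sg unfolding simple_graph_def by blast
  have esub: "\<And>e. e\<in>ES \<Longrightarrow> e \<subseteq> VS" using tr_edge_sub[OF t] .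
  have i2: "\<forall>w\<in>V-VS. \<forall>a\<in>VS. \<forall>b\<in>VS. {a,w}\<in>ES \<longrightarrow> {b,w}\<in>ES \<longrightarrow> a=b" using esub by blast
  have i1: "\<forall>e\<in>ES-ES. \<not> e \<subseteq> VS" by simp
  have ex: "\<exists>ET'. tr V ET' \<and> ES \<subseteq> ET' \<and> ET' \<subseteq> E \<and> (\<forall>e\<in>ET'-ES. \<not> e \<subseteq> VS) \<and>
      (\<forall>w\<in>V-VS. \<forall>a\<in>VS. \<forall>b\<in>VS. {a,w}\<in>ET' \<longrightarrow> {b,w}\<in>ET' \<longrightarrow> a=b)"
    by (rule extend_tree[OF sg cg t order_refl VS order_refl ES i1 i2])
  then obtain ET where H: "tr V ET \<and> ES \<subseteq> ET \<and> ET \<subseteq> E \<and> (\<forall>e\<in>ET-ES. \<not> e \<subseteq> VS) \<and>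
      (\<forall>w\<in>V-VS. \<forall>a\<in>VS. \<forall>b\<in>VS. {a,w}\<in>ET \<longrightarrow> {b,w}\<in>ET \<longrightarrow> a=b)" by (elim exE)
  hence ET: "tr V ET" "ES \<subseteq> ET" "ET \<subseteq> E" "\<forall>e\<in>ET-ES. \<not> e \<subseteq> VS" and
     inv: "\<forall>w\<in>V-VS. \<forall>a\<in>VS. \<forall>b\<in>VS. {a,w}\<in>ET \<longrightarrow> {b,w}\<in>ET \<longrightarrow> a=b" by simp_all
  have edET: "\<forall>e\<in>ET. \<exists>a b. a\<noteq>b \<and> e={a,b} \<and> a\<in>V \<and> b\<in>V" using tr_basic[OF ET(1)] by blast
  define D where "D = n - 1 - m"
  have deg: "\<forall>v. card {e\<in>ET. v\<in>e} \<le> D"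
  proof
    fix v
    show "card {e\<in>ET. v\<in>e} \<le> D"
    proof (cases "v \<in> V")
      case False
      hence "{e\<in>ET. v\<in>e} = {}" using tr_edge_sub[OF ET(1)] by blast
      thus ?thesis by (metis card.empty le0)
    next
      case vV: True
      show ?thesis
      proof (cases "v \<in> VS")
        case True
        then obtain N where N: "N \<subseteq> VS" "v\<notin>N" "m \<le> card N" "\<forall>x\<in>N. {v,x}\<notin>ES" using nn by blast
        have "\<forall>x\<in>N. {v,x} \<notin> ET"
        proof
          fix x assume x: "x\<in>N"
          show "{v,x}\<notin>ET"
          proof
            assume "{v,x}\<in>ET"
            moreover have "{v,x} \<subseteq> VS" using x N(1) True by blast
            ultimately have "{v,x}\<in>ES" using ET(4) by blast
            thus False using N(4) x by blast
          qed
        qed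
        have "N \<subseteq> V" using N(1) VS by blast
        from deg_bound[OF edET finV vV this N(2) \<open>\<forall>x\<in>N. {v,x} \<notin> ET\<close>]
        have "card {e\<in>ET. v\<in>e} \<le> card V - 1 - card N" .
        thus ?thesis using N(3) n unfolding D_def by linarith
      next
        case False
        define Q where "Q = {a\<in>VS. {a,v}\<in>ET}"
        have finVS: "finite VS" using tr_basic[OF t] by blast
        have Q: "Q \<subseteq> VS" "finite Q" unfolding Q_def using finVS by auto
        have "\<forall>a\<in>Q. \<forall>b\<in>Q. a=b" using inv vV False unfolding Q_def by auto
        hence cQ: "card Q \<le> 1" using card_le_Suc0_iff_eq[OF Q(2)] by simp
        define N where "N = VS - Q"
        have "card N = card VS - card Q" unfolding N_def using Q finVS by (simp add: card_Diff_subset)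
        hence cN: "m \<le> card N" using cs cQ by linarith
        have "\<forall>x\<in>N. {v,x}\<notin>ET" unfolding N_def Q_def by (auto simp: insert_commute)
        have "N \<subseteq> V" "v \<notin> N" using VS False unfolding N_def by auto
        from deg_bound[OF edET finV vV this \<open>\<forall>x\<in>N. {v,x}\<notin>ET\<close>]
        have "card {e\<in>ET. v\<in>e} \<le> card V - 1 - card N" .
        thus ?thesis using cN n unfolding D_def by linarith
      qed
    qed
  qed
  obtain c :: "'a set \<Rightarrow> nat" where c: "proper_edges c ET" "c ` ET \<subseteq> {..<D}" using tr_color[OF ET(1) deg] by blast
  define c' where "c' = (\<lambda>e. if e\<in>ET then c e else 0)"
  have D1: "0 < D" using mn unfolding D_def by simp
  have "c' ` E \<subseteq> {..<D}" using c(2) D1 unfolding c'_def by auto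
  hence "card (c' ` E) \<le> card {..<D}" by (intro card_mono) auto
  hence "card (c' ` E) \<le> D" by simp
  moreover have "k_proper_coloring k V E c'"
    unfolding k_proper_coloring_def proper_S_tree_exists_def
  proof (intro allI impI)
    fix S assume "S \<subseteq> V \<and> card S = k"
    moreover have "subgraph V ET V E" unfolding subgraph_def using ET(3) tr_edge_sub[OF ET(1)] by blast
    moreover have "is_tree V ET" by (rule tr_is_tree[OF ET(1)])
    moreover have "proper_edges c' ET" using c(1) unfolding proper_edges_def c'_def by simp
    ultimately show "\<exists>VT ET'. subgraph VT ET' V E \<and> is_tree VT ET' \<and> S \<subseteq> VT \<and> proper_edges c' ET'" by blast
  qed
  ultimately show ?thesis unfolding D_def by blast
qed



lemma px_le: "k_proper_coloring k V E c \<Longrightarrow> card (c`E) \<le> b \<Longrightarrow> px k V E \<le> b"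
proof -
  assume a: "k_proper_coloring k V E c" "card (c`E) \<le> b"
  have "(LEAST m. \<exists>c. k_proper_coloring k V E c \<and> card (c ` E) = m) \<le> card (c`E)"
    by (rule Least_le) (use a(1) in blast)
  thus ?thesis using a(2) unfolding px_def by linarith
qed

lemma px_ge: "\<exists>c. k_proper_coloring k V E c \<Longrightarrow> (\<And>c. k_proper_coloring k V E c \<Longrightarrow> b \<le> card (c`E)) \<Longrightarrow> b \<le> px k V E"
proof -
  assume a: "\<exists>c. k_proper_coloring k V E c" and b: "\<And>c. k_proper_coloring k V E c \<Longrightarrow> b \<le> card (c`E)"
  then obtain c where c: "k_proper_coloring k V E c" by blast
  have "\<exists>c'. k_proper_coloring k V E c' \<and> card (c'`E) = px k V E"
    unfolding px_def by (rule LeastI[where k = "card (c`E)"]) (use c in blast)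
  then obtain c' where "k_proper_coloring k V E c'" "card (c'`E) = px k V E" by blast
  thus ?thesis using b[of c'] by simp
qed

lemma get_tree:
  assumes kp: "k_proper_coloring k V E c" and fin: "finite V" and T: "T \<subseteq> V" "card T \<le> k" and kn: "k \<le> card V"
  shows "\<exists>VT ET. subgraph VT ET V E \<and> is_tree VT ET \<and> T \<subseteq> VT \<and> proper_edges c ET"
proof -
  have "card (V - T) = card V - card T" using T fin by (simp add: card_Diff_subset finite_subset)
  hence "k - card T \<le> card (V - T)" using kn by linarith
  then obtain U where U: "U \<subseteq> V - T" "card U = k - card T" "finite U" by (rule obtain_subset_with_card_n)
  have "card (T \<union> U) = card T + card U" using U fin T by (subst card_Un_disjoint) (auto intro: finite_subset)
  hence "card (T \<union> U) = k" using U T by simp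
  moreover have "T \<union> U \<subseteq> V" using U T by auto
  ultimately have "proper_S_tree_exists V E c (T \<union> U)" using kp unfolding k_proper_coloring_def by blast
  thus ?thesis unfolding proper_S_tree_exists_def by blast
qed

lemma tree_cut:
  assumes t: "is_tree VT ET" and s: "subgraph VT ET V E" and xy: "x\<in>VT" "y\<in>VT" "x\<in>A" "y\<notin>A"
    and F: "\<forall>a b. {a,b}\<in>E \<longrightarrow> a\<in>A \<longrightarrow> b\<notin>A \<longrightarrow> {a,b}\<in>F"
  shows "\<exists>e\<in>F. e\<in>ET"
proof -
  have "(\<lambda>a b. {a,b}\<in>ET)\<^sup>*\<^sup>* x y" using t xy unfolding is_tree_def connected_graph_def by blast
  from rtranclp_cross[OF this xy(3) xy(4)] obtain a b where "{a,b}\<in>ET" "a\<in>A" "b\<notin>A" by blast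
  moreover hence "{a,b}\<in>E" using s unfolding subgraph_def by blast
  ultimately show ?thesis using F by blast
qed


lemma nn1: "\<forall>v\<in>VS. \<exists>x\<in>VS. x\<noteq>v \<and> {v,x}\<notin>ES \<Longrightarrow>
  \<forall>v\<in>VS. \<exists>N. N \<subseteq> VS \<and> v\<notin>N \<and> 1 \<le> card N \<and> (\<forall>x\<in>N. {v,x}\<notin>ES)"
proof
  fix v assume "\<forall>v\<in>VS. \<exists>x\<in>VS. x\<noteq>v \<and> {v,x}\<notin>ES" "v \<in> VS"
  then obtain x where "x\<in>VS" "x\<noteq>v" "{v,x}\<notin>ES" by blast
  thus "\<exists>N. N \<subseteq> VS \<and> v\<notin>N \<and> 1 \<le> card N \<and> (\<forall>x\<in>N. {v,x}\<notin>ES)"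
    by (intro exI[of _ "{x}"]) auto
qed

lemma nn2: "\<forall>v\<in>VS. \<exists>x\<in>VS. \<exists>y\<in>VS. x\<noteq>v \<and> y\<noteq>v \<and> x\<noteq>y \<and> {v,x}\<notin>ES \<and> {v,y}\<notin>ES \<Longrightarrow>
  \<forall>v\<in>VS. \<exists>N. N \<subseteq> VS \<and> v\<notin>N \<and> 2 \<le> card N \<and> (\<forall>x\<in>N. {v,x}\<notin>ES)"
proof
  fix v assume "\<forall>v\<in>VS. \<exists>x\<in>VS. \<exists>y\<in>VS. x\<noteq>v \<and> y\<noteq>v \<and> x\<noteq>y \<and> {v,x}\<notin>ES \<and> {v,y}\<notin>ES" "v \<in> VS"
  then obtain x y where "x\<in>VS" "y\<in>VS" "x\<noteq>v" "y\<noteq>v" "x\<noteq>y" "{v,x}\<notin>ES" "{v,y}\<notin>ES" by blast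
  thus "\<exists>N. N \<subseteq> VS \<and> v\<notin>N \<and> 2 \<le> card N \<and> (\<forall>x\<in>N. {v,x}\<notin>ES)"
    by (intro exI[of _ "{x,y}"]) auto
qed

lemma seed_P4:
  assumes sg: "simple_graph V E" and cg: "connected_graph V E" and n: "card V = n" and n3: "3 < n"
    and V: "a \<in> V" "b \<in> V" "c \<in> V" "d \<in> V" and dist: "distinct [a,b,c,d]"
    and E: "{a,b} \<in> E" "{b,c} \<in> E" "{c,d} \<in> E"
  shows "\<exists>col. k_proper_coloring k V E col \<and> card (col ` E) \<le> n - 2"
proof -
  let ?VS = "insert d (insert c (insert b {a}))" and ?ES = "insert {c,d} (insert {b,c} (insert {a,b} {}))"
  have t: "tr ?VS ?ES" by (intro tr_add tr_single) (use dist in auto)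
  have "d \<notin> {c,b,a}" "c \<notin> {b,a}" "b \<notin> {a}" using dist by auto
  hence cs: "1 + 1 \<le> card ?VS" by simp
  have "\<forall>v\<in>?VS. \<exists>x\<in>?VS. x\<noteq>v \<and> {v,x}\<notin>?ES"
  proof
    fix v assume v: "v \<in> ?VS"
    have "{a,c} \<notin> ?ES" "{b,d} \<notin> ?ES" "{c,a} \<notin> ?ES" "{d,a} \<notin> ?ES" using dist by (auto simp: doubleton_eq_iff)
    moreover have "v = a \<or> v = b \<or> v = c \<or> v = d" using v by auto
    ultimately show "\<exists>x\<in>?VS. x\<noteq>v \<and> {v,x}\<notin>?ES"
    proof (elim disjE)
      assume "v = a" thus ?thesis using \<open>{a,c} \<notin> ?ES\<close> dist by (intro bexI[of _ c]) auto
    next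
      assume "v = b" thus ?thesis using \<open>{b,d} \<notin> ?ES\<close> dist by (intro bexI[of _ d]) auto
    next
      assume "v = c" thus ?thesis using \<open>{c,a} \<notin> ?ES\<close> dist by (intro bexI[of _ a]) auto
    next
      assume "v = d" thus ?thesis using \<open>{d,a} \<notin> ?ES\<close> dist by (intro bexI[of _ a]) auto
    qed
  qed
  from nn1[OF this] have nn: "\<forall>v\<in>?VS. \<exists>N. N \<subseteq> ?VS \<and> v\<notin>N \<and> 1 \<le> card N \<and> (\<forall>x\<in>N. {v,x}\<notin>?ES)" .
  have "1 + 1 < n" using n3 by simp
  from seed_bound[OF sg cg n t _ _ cs this nn] V E have "\<exists>c. k_proper_coloring k V E c \<and> card (c ` E) \<le> n - 1 - 1" by auto
  thus ?thesis by (simp add: numeral_2_eq_2)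
qed

lemma seed_P5:
  assumes sg: "simple_graph V E" and cg: "connected_graph V E" and n: "card V = n" and n3: "4 < n"
    and V: "a \<in> V" "b \<in> V" "c \<in> V" "d \<in> V" "e \<in> V" and dist: "distinct [a,b,c,d,e]"
    and E: "{a,b} \<in> E" "{b,c} \<in> E" "{c,d} \<in> E" "{d,e} \<in> E"
  shows "\<exists>col. k_proper_coloring k V E col \<and> card (col ` E) \<le> n - 3"
proof -
  let ?VS = "insert e (insert d (insert c (insert b {a})))"
  let ?ES = "insert {d,e} (insert {c,d} (insert {b,c} (insert {a,b} {})))"
  have t: "tr ?VS ?ES" by (intro tr_add tr_single) (use dist in auto)
  have "e \<notin> {d,c,b,a}" "d \<notin> {c,b,a}" "c \<notin> {b,a}" "b \<notin> {a}" using dist by auto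
  hence cs: "2 + 1 \<le> card ?VS" by simp
  have "\<forall>v\<in>?VS. \<exists>x\<in>?VS. \<exists>y\<in>?VS. x\<noteq>v \<and> y\<noteq>v \<and> x\<noteq>y \<and> {v,x}\<notin>?ES \<and> {v,y}\<notin>?ES"
  proof
    fix v assume v: "v \<in> ?VS"
    have "{a,c} \<notin> ?ES" "{a,d} \<notin> ?ES" "{b,d} \<notin> ?ES" "{b,e} \<notin> ?ES" "{c,a} \<notin> ?ES" "{c,e} \<notin> ?ES"
      "{d,a} \<notin> ?ES" "{d,b} \<notin> ?ES" "{e,a} \<notin> ?ES" "{e,b} \<notin> ?ES"
      using dist by (auto simp: doubleton_eq_iff)
    moreover have "v = a \<or> v = b \<or> v = c \<or> v = d \<or> v = e" using v by auto
    ultimately show "\<exists>x\<in>?VS. \<exists>y\<in>?VS. x\<noteq>v \<and> y\<noteq>v \<and> x\<noteq>y \<and> {v,x}\<notin>?ES \<and> {v,y}\<notin>?ES"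
    proof (elim disjE)
      assume "v = a" show ?thesis by (rule bexI[of _ c], rule bexI[of _ d]) (use \<open>{a,c} \<notin> ?ES\<close> \<open>{a,d} \<notin> ?ES\<close> dist \<open>v = a\<close> in auto)
    next
      assume "v = b" show ?thesis by (rule bexI[of _ d], rule bexI[of _ e]) (use \<open>{b,d} \<notin> ?ES\<close> \<open>{b,e} \<notin> ?ES\<close> dist \<open>v = b\<close> in auto)
    next
      assume "v = c" show ?thesis by (rule bexI[of _ a], rule bexI[of _ e]) (use \<open>{c,a} \<notin> ?ES\<close> \<open>{c,e} \<notin> ?ES\<close> dist \<open>v = c\<close> in auto)
    next
      assume "v = d" show ?thesis by (rule bexI[of _ a], rule bexI[of _ b]) (use \<open>{d,a} \<notin> ?ES\<close> \<open>{d,b} \<notin> ?ES\<close> dist \<open>v = d\<close> in auto)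
    next
      assume "v = e" show ?thesis by (rule bexI[of _ a], rule bexI[of _ b]) (use \<open>{e,a} \<notin> ?ES\<close> \<open>{e,b} \<notin> ?ES\<close> dist \<open>v = e\<close> in auto)
    qed
  qed
  from nn2[OF this] have nn: "\<forall>v\<in>?VS. \<exists>N. N \<subseteq> ?VS \<and> v\<notin>N \<and> 2 \<le> card N \<and> (\<forall>x\<in>N. {v,x}\<notin>?ES)" .
  have "2 + 1 < n" using n3 by simp
  from seed_bound[OF sg cg n t _ _ cs this nn] V E have "\<exists>c. k_proper_coloring k V E c \<and> card (c ` E) \<le> n - 1 - 2" by auto
  thus ?thesis by (simp add: numeral_3_eq_3)
qed

lemma seed_H:
  assumes sg: "simple_graph V E" and cg: "connected_graph V E" and n: "card V = n" and n3: "4 < n"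
    and V: "x \<in> V" "y \<in> V" "l1 \<in> V" "l2 \<in> V" "m1 \<in> V" "m2 \<in> V" and dist: "distinct [x,y,l1,l2,m1,m2]"
    and E: "{x,y} \<in> E" "{x,l1} \<in> E" "{x,l2} \<in> E" "{y,m1} \<in> E" "{y,m2} \<in> E"
  shows "\<exists>col. k_proper_coloring k V E col \<and> card (col ` E) \<le> n - 3"
proof -
  let ?VS = "insert m2 (insert m1 (insert l2 (insert l1 (insert y {x}))))"
  let ?ES = "insert {y,m2} (insert {y,m1} (insert {x,l2} (insert {x,l1} (insert {x,y} {}))))"
  have t: "tr ?VS ?ES" by (intro tr_add tr_single) (use dist in auto)
  have "m2 \<notin> {m1,l2,l1,y,x}" "m1 \<notin> {l2,l1,y,x}" "l2 \<notin> {l1,y,x}" "l1 \<notin> {y,x}" "y \<notin> {x}" using dist by auto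
  hence cs: "2 + 1 \<le> card ?VS" by simp
  have "\<forall>v\<in>?VS. \<exists>a\<in>?VS. \<exists>b\<in>?VS. a\<noteq>v \<and> b\<noteq>v \<and> a\<noteq>b \<and> {v,a}\<notin>?ES \<and> {v,b}\<notin>?ES"
  proof
    fix v assume v: "v \<in> ?VS"
    have "{x,m1} \<notin> ?ES" "{x,m2} \<notin> ?ES" "{y,l1} \<notin> ?ES" "{y,l2} \<notin> ?ES" "{l1,y} \<notin> ?ES" "{l1,l2} \<notin> ?ES"
      "{l2,y} \<notin> ?ES" "{l2,l1} \<notin> ?ES" "{m1,x} \<notin> ?ES" "{m1,m2} \<notin> ?ES" "{m2,x} \<notin> ?ES" "{m2,m1} \<notin> ?ES"
      using dist by (auto simp: doubleton_eq_iff)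
    moreover have neq: "x \<noteq> y" "x \<noteq> l1" "x \<noteq> l2" "x \<noteq> m1" "x \<noteq> m2" "y \<noteq> x" "y \<noteq> l1" "y \<noteq> l2" "y \<noteq> m1" "y \<noteq> m2" "l1 \<noteq> x" "l1 \<noteq> y" "l1 \<noteq> l2" "l1 \<noteq> m1" "l1 \<noteq> m2" "l2 \<noteq> x" "l2 \<noteq> y" "l2 \<noteq> l1" "l2 \<noteq> m1" "l2 \<noteq> m2" "m1 \<noteq> x" "m1 \<noteq> y" "m1 \<noteq> l1" "m1 \<noteq> l2" "m1 \<noteq> m2" "m2 \<noteq> x" "m2 \<noteq> y" "m2 \<noteq> l1" "m2 \<noteq> l2" "m2 \<noteq> m1" using dist by auto
    moreover have "v = x \<or> v = y \<or> v = l1 \<or> v = l2 \<or> v = m1 \<or> v = m2" using v by auto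
    ultimately show "\<exists>a\<in>?VS. \<exists>b\<in>?VS. a\<noteq>v \<and> b\<noteq>v \<and> a\<noteq>b \<and> {v,a}\<notin>?ES \<and> {v,b}\<notin>?ES"
    proof (elim disjE)
      assume "v = x" show ?thesis by (rule bexI[of _ m1], rule bexI[of _ m2]) (use \<open>{x,m1} \<notin> ?ES\<close> \<open>{x,m2} \<notin> ?ES\<close> neq \<open>v = x\<close> in simp_all)
    next
      assume "v = y" show ?thesis by (rule bexI[of _ l1], rule bexI[of _ l2]) (use \<open>{y,l1} \<notin> ?ES\<close> \<open>{y,l2} \<notin> ?ES\<close> neq \<open>v = y\<close> in simp_all)
    next
      assume "v = l1" show ?thesis by (rule bexI[of _ y], rule bexI[of _ l2]) (use \<open>{l1,y} \<notin> ?ES\<close> \<open>{l1,l2} \<notin> ?ES\<close> neq \<open>v = l1\<close> in simp_all)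
    next
      assume "v = l2" show ?thesis by (rule bexI[of _ y], rule bexI[of _ l1]) (use \<open>{l2,y} \<notin> ?ES\<close> \<open>{l2,l1} \<notin> ?ES\<close> neq \<open>v = l2\<close> in simp_all)
    next
      assume "v = m1" show ?thesis by (rule bexI[of _ x], rule bexI[of _ m2]) (use \<open>{m1,x} \<notin> ?ES\<close> \<open>{m1,m2} \<notin> ?ES\<close> neq \<open>v = m1\<close> in simp_all)
    next
      assume "v = m2" show ?thesis by (rule bexI[of _ x], rule bexI[of _ m1]) (use \<open>{m2,x} \<notin> ?ES\<close> \<open>{m2,m1} \<notin> ?ES\<close> neq \<open>v = m2\<close> in simp_all)
    qed
  qed
  from nn2[OF this] have nn: "\<forall>v\<in>?VS. \<exists>N. N \<subseteq> ?VS \<and> v\<notin>N \<and> 2 \<le> card N \<and> (\<forall>x\<in>N. {v,x}\<notin>?ES)" .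
  have "2 + 1 < n" using n3 by simp
  from seed_bound[OF sg cg n t _ _ cs this nn] V E have "\<exists>c. k_proper_coloring k V E c \<and> card (c ` E) \<le> n - 1 - 2" by auto
  thus ?thesis by (simp add: numeral_3_eq_3)
qed


lemma splus_mem: "{i,j} \<in> Splus_edges n \<longleftrightarrow> (i=0 \<and> 1\<le>j \<and> j<n) \<or> (j=0 \<and> 1\<le>i \<and> i<n) \<or> (i=1 \<and> j=2) \<or> (i=2 \<and> j=1)"
  unfolding Splus_edges_def by (auto simp: doubleton_eq_iff)

lemma g0_mem: "{i,j} \<in> G0_edges n \<longleftrightarrow> (i=0 \<and> 1\<le>j \<and> j<n-1) \<or> (j=0 \<and> 1\<le>i \<and> i<n-1) \<or> (i=n-2 \<and> j=n-1) \<or> (i=n-1 \<and> j=n-2)"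
  unfolding G0_edges_def by (auto simp: doubleton_eq_iff)

lemma iso_inv:
  fixes n :: nat
  assumes "graph_iso V E {0..<n} E'"
  shows "\<exists>g. bij_betw g {0..<n} V \<and> (\<forall>i<n. \<forall>j<n. {g i, g j} \<in> E \<longleftrightarrow> {i,j} \<in> E')"
proof -
  obtain f where f: "bij_betw f V {0..<n}" and iso: "\<forall>u\<in>V. \<forall>v\<in>V. {u, v} \<in> E \<longleftrightarrow> {f u, f v} \<in> E'"
    using assms unfolding graph_iso_def by blast
  define g where "g = inv_into V f"
  have g: "bij_betw g {0..<n} V" unfolding g_def by (rule bij_betw_inv_into[OF f])
  have fg: "f (g i) = i" if "i < n" for i
  proof -
    have "i \<in> f ` V" using that bij_betw_imp_surj_on[OF f] by auto
    thus ?thesis unfolding g_def by (rule f_inv_into_f)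
  qed
  have gV: "\<And>i. i < n \<Longrightarrow> g i \<in> V" using bij_betw_apply[OF g] by simp
  have "\<forall>i<n. \<forall>j<n. {g i, g j} \<in> E \<longleftrightarrow> {i,j} \<in> E'"
  proof (intro allI impI)
    fix i j assume "i < n" "j < n"
    thus "{g i, g j} \<in> E \<longleftrightarrow> {i,j} \<in> E'" using iso gV fg by metis
  qed
  thus ?thesis using g by blast
qed

lemma bij_facts:
  fixes n :: nat
  assumes g: "bij_betw g {0..<n} V"
  shows "\<And>i. i<n \<Longrightarrow> g i \<in> V" "\<And>i j. i<n \<Longrightarrow> j<n \<Longrightarrow> g i = g j \<longleftrightarrow> i = j"
    "\<And>v. v \<in> V \<Longrightarrow> \<exists>i<n. v = g i"
proof -
  show "\<And>i. i<n \<Longrightarrow> g i \<in> V" using bij_betw_apply[OF g] by simp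
  show "\<And>i j. i<n \<Longrightarrow> j<n \<Longrightarrow> g i = g j \<longleftrightarrow> i = j" using g bij_betw_imp_inj_on
    by (metis atLeastLessThan_iff inj_on_eq_iff zero_le)
  show "\<And>v. v \<in> V \<Longrightarrow> \<exists>i<n. v = g i" using bij_betw_imp_surj_on[OF g] by auto
qed

lemma card2: "card {a,b} \<le> 2"
  by (cases "a = b") auto

lemma card3: "card {a,b,c} \<le> 3"
proof -
  have "card {a,b,c} \<le> Suc (card {b,c})" by (simp add: card_insert_if)
  thus ?thesis using card2[of b c] by linarith
qed

lemma simple_finE: "simple_graph V E \<Longrightarrow> finite E"
proof -
  assume sg: "simple_graph V E"
  have "E \<subseteq> Pow V"
  proof
    fix e assume "e \<in> E"
    then obtain u v where "e = {u,v}" "u \<in> V" "v \<in> V" using sg unfolding simple_graph_def by metis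
    thus "e \<in> Pow V" by simp
  qed
  moreover have "finite (Pow V)" using sg unfolding simple_graph_def by simp
  ultimately show ?thesis by (rule finite_subset)
qed

lemma proper_use: "proper_edges c ET \<Longrightarrow> e\<in>ET \<Longrightarrow> f\<in>ET \<Longrightarrow> e\<noteq>f \<Longrightarrow> x\<in>e \<Longrightarrow> x\<in>f \<Longrightarrow> c e \<noteq> c f"
  unfolding proper_edges_def by (metis IntI empty_iff)

lemma splus_px:
  assumes sg: "simple_graph V E" and cg: "connected_graph V E" and n: "card V = n" and n5: "5 \<le> n"
    and k: "3 \<le> k" "k \<le> n"
    and g: "bij_betw g {0..<n} V" and ge: "\<forall>i<n. \<forall>j<n. {g i, g j}\<in>E \<longleftrightarrow> {i,j}\<in>Splus_edges n"
  shows "px k V E = n - 2"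
proof -
  note gV = bij_facts(1)[OF g] and ginj = bij_facts(2)[OF g] and vtx = bij_facts(3)[OF g]
  have finV: "finite V" using sg unfolding simple_graph_def by blast
  have edge: "\<And>i j. i<n \<Longrightarrow> j<n \<Longrightarrow> {g i, g j}\<in>E \<longleftrightarrow> (i=0 \<and> 1\<le>j) \<or> (j=0 \<and> 1\<le>i) \<or> (i=1\<and>j=2) \<or> (i=2\<and>j=1)"
    using ge splus_mem by auto
  have up: "\<exists>col. k_proper_coloring k V E col \<and> card (col ` E) \<le> n - 2"
    by (rule seed_P4[OF sg cg n _ gV gV gV gV, of 1 2 0 3]) (use n5 ginj edge in auto)
  then obtain col where col: "k_proper_coloring k V E col" "card (col ` E) \<le> n - 2" by blast
  have "px k V E \<le> n - 2" by (rule px_le[OF col])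
  moreover have "n - 2 \<le> px k V E"
  proof (rule px_ge)
    show "\<exists>c. k_proper_coloring k V E c" using col by blast
  next
    fix c assume kp: "k_proper_coloring k V E c"
    have pend: "{g 0, g a} \<in> ET" if a: "3 \<le> a" "a < n" and t: "is_tree VT ET" "subgraph VT ET V E"
      and v: "g a \<in> VT" "y \<in> VT" "y \<noteq> g a" for a VT ET y
    proof -
      have "\<forall>p q. {p,q}\<in>E \<longrightarrow> p\<in>{g a} \<longrightarrow> q\<notin>{g a} \<longrightarrow> {p,q}\<in>{{g 0, g a}}"
      proof (intro allI impI)
        fix p q assume pq: "{p,q}\<in>E" "p\<in>{g a}" "q\<notin>{g a}"
        obtain j where j: "j < n" "q = g j" using vtx simple_edge[OF sg pq(1)] by blast
        have "{g a, g j} \<in> E" using pq j by simp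
        hence "j = 0" using edge[OF a(2) j(1)] a by auto
        thus "{p,q}\<in>{{g 0, g a}}" using pq j by auto
      qed
      from tree_cut[OF t v(1) v(2) _ _ this] v show ?thesis by auto
    qed
    define P where "P = (\<lambda>i. {g 0, g i}) ` {3..<n}"
    have PE: "P \<subseteq> E" unfolding P_def using edge by auto
    have cdiff: "c {g 0, g i} \<noteq> c {g 0, g j}" if ij: "i \<in> {3..<n}" "j \<in> {3..<n}" "i \<noteq> j" for i j
    proof -
      have "card {g i, g j} \<le> k" using k card2[of "g i" "g j"] by linarith
      moreover have "{g i, g j} \<subseteq> V" using gV ij by auto
      ultimately obtain VT ET where T: "subgraph VT ET V E" "is_tree VT ET" "{g i, g j} \<subseteq> VT" "proper_edges c ET"
        using get_tree[OF kp finV] k n by blast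
      have gij: "g i \<noteq> g j" "g i \<noteq> g 0" "g j \<noteq> g 0" using ginj ij by auto
      have e1: "{g 0, g i}\<in>ET" by (rule pend[OF _ _ T(2) T(1), of i "g j"]) (use ij T(3) gij in auto)
      have e2: "{g 0, g j}\<in>ET" by (rule pend[OF _ _ T(2) T(1), of j "g i"]) (use ij T(3) gij in auto)
      have "{g 0, g i} \<noteq> {g 0, g j}" using gij by (auto simp: doubleton_eq_iff)
      thus ?thesis using proper_use[OF T(4) e1 e2, of "g 0"] by simp
    qed
    have injP: "inj_on c P"
    proof (rule inj_onI)
      fix e f assume "e \<in> P" "f \<in> P" "c e = c f"
      then obtain i j where "i \<in> {3..<n}" "j \<in> {3..<n}" "e = {g 0, g i}" "f = {g 0, g j}" "c e = c f"
        unfolding P_def by blast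
      thus "e = f" using cdiff by (cases "i = j") auto
    qed
    have "inj_on (\<lambda>i. {g 0, g i}) {3..<n}"
    proof (rule inj_onI)
      fix i j assume ij: "i \<in> {3..<n}" "j \<in> {3..<n}" "{g 0, g i} = {g 0, g j}"
      hence "g i = g j" using ginj[of i 0] ginj[of j 0] by (auto simp: doubleton_eq_iff)
      thus "i = j" using ginj ij by auto
    qed
    hence cP: "card (c ` P) = n - 3" using injP unfolding P_def by (simp add: card_image)
    have "\<exists>e\<in>E. c e \<notin> c ` P"
    proof (rule ccontr)
      assume "\<not> (\<exists>e\<in>E. c e \<notin> c ` P)"
      hence all: "\<forall>e\<in>E. c e \<in> c ` P" by blast
      have e01: "{g 0, g 1}\<in>E" "{g 0, g 2}\<in>E" using edge n5 by auto
      obtain a where a: "a\<in>{3..<n}" "c {g 0, g 1} = c {g 0, g a}" using all e01 unfolding P_def by auto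
      obtain b where b: "b\<in>{3..<n}" "c {g 0, g 2} = c {g 0, g b}" using all e01 unfolding P_def by auto
      have "card {g 1, g a, g b} \<le> k" using k card3[of "g 1" "g a" "g b"] by linarith
      moreover have "{g 1, g a, g b} \<subseteq> V" using gV a b n5 by auto
      ultimately obtain VT ET where T: "subgraph VT ET V E" "is_tree VT ET" "{g 1, g a, g b} \<subseteq> VT" "proper_edges c ET"
        using get_tree[OF kp finV] k n by blast
      have dd: "g 1 \<noteq> g a" "g 1 \<noteq> g b" "g 2 \<noteq> g b" "g 0 \<noteq> g a" "g 0 \<noteq> g b" "g 0 \<noteq> g 1" "g 0 \<noteq> g 2"
        using ginj a b n5 by auto
      have ea: "{g 0, g a}\<in>ET" by (rule pend[OF _ _ T(2) T(1), of a "g 1"]) (use a T(3) dd in auto)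
      have eb: "{g 0, g b}\<in>ET" by (rule pend[OF _ _ T(2) T(1), of b "g 1"]) (use b T(3) dd in auto)
      have F: "\<forall>p q. {p,q}\<in>E \<longrightarrow> p\<in>{g 1, g 2} \<longrightarrow> q\<notin>{g 1, g 2} \<longrightarrow> {p,q}\<in>{{g 0, g 1},{g 0, g 2}}"
      proof (intro allI impI)
        fix p q assume pq: "{p,q}\<in>E" "p\<in>{g 1, g 2}" "q\<notin>{g 1, g 2}"
        obtain j where j: "j < n" "q = g j" using vtx simple_edge[OF sg pq(1)] by blast
        have "j \<noteq> 1" "j \<noteq> 2" using pq j by auto
        show "{p,q}\<in>{{g 0, g 1},{g 0, g 2}}"
        proof (cases "p = g 1")
          case True
          hence "{g 1, g j} \<in> E" using pq j by simp
          hence "j = 0" using edge[of 1 j] j \<open>j \<noteq> 2\<close> n5 by auto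
          thus ?thesis using True j by auto
        next
          case False
          hence p2: "p = g 2" using pq by auto
          hence "{g 2, g j} \<in> E" using pq j by simp
          hence "j = 0" using edge[of 2 j] j \<open>j \<noteq> 1\<close> n5 by auto
          thus ?thesis using p2 j by auto
        qed
      qed
      have "g a \<notin> {g 1, g 2}" using ginj a n5 by auto
      from tree_cut[OF T(2) T(1) _ _ _ this F] T(3)
      have "{g 0, g 1} \<in> ET \<or> {g 0, g 2} \<in> ET" by auto
      thus False
      proof
        assume "{g 0, g 1} \<in> ET"
        moreover have "{g 0, g 1} \<noteq> {g 0, g a}" using dd by (auto simp: doubleton_eq_iff)
        ultimately show False using proper_use[OF T(4) _ ea, of "{g 0, g 1}" "g 0"] a(2) by simp
      next
        assume "{g 0, g 2} \<in> ET"
        moreover have "{g 0, g 2} \<noteq> {g 0, g b}" using dd by (auto simp: doubleton_eq_iff)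
        ultimately show False using proper_use[OF T(4) _ eb, of "{g 0, g 2}" "g 0"] b(2) by simp
      qed
    qed
    then obtain e where e: "e \<in> E" "c e \<notin> c ` P" by blast
    have finE: "finite E" by (rule simple_finE[OF sg])
    have "insert (c e) (c ` P) \<subseteq> c ` E" using PE e by auto
    hence "card (insert (c e) (c ` P)) \<le> card (c ` E)" using finE by (intro card_mono) auto
    moreover have "card (insert (c e) (c ` P)) = Suc (n - 3)" using e cP
      by (subst card_insert_disjoint) (auto simp: P_def)
    ultimately show "n - 2 \<le> card (c ` E)" using n5 by linarith
  qed
  ultimately show ?thesis by simp
qed


lemma g0_px:
  assumes sg: "simple_graph V E" and cg: "connected_graph V E" and n: "card V = n" and n5: "5 \<le> n"
    and k: "3 \<le> k" "k \<le> n"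
    and g: "bij_betw g {0..<n} V" and ge: "\<forall>i<n. \<forall>j<n. {g i, g j}\<in>E \<longleftrightarrow> {i,j}\<in>G0_edges n"
  shows "px k V E = n - 2"
proof -
  note gV = bij_facts(1)[OF g] and ginj = bij_facts(2)[OF g] and vtx = bij_facts(3)[OF g]
  have finV: "finite V" using sg unfolding simple_graph_def by blast
  have edge: "\<And>i j. i<n \<Longrightarrow> j<n \<Longrightarrow> {g i, g j}\<in>E \<longleftrightarrow> (i=0 \<and> 1\<le>j \<and> j<n-1) \<or> (j=0 \<and> 1\<le>i \<and> i<n-1) \<or> (i=n-2 \<and> j=n-1) \<or> (i=n-1 \<and> j=n-2)"
    using ge g0_mem by auto
  have up: "\<exists>col. k_proper_coloring k V E col \<and> card (col ` E) \<le> n - 2"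
    by (rule seed_P4[OF sg cg n _ gV gV gV gV, of 1 0 "n-2" "n-1"]) (use n5 ginj edge in auto)
  then obtain col where col: "k_proper_coloring k V E col" "card (col ` E) \<le> n - 2" by blast
  have "px k V E \<le> n - 2" by (rule px_le[OF col])
  moreover have "n - 2 \<le> px k V E"
  proof (rule px_ge)
    show "\<exists>c. k_proper_coloring k V E c" using col by blast
  next
    fix c assume kp: "k_proper_coloring k V E c"
    define rep where "rep i = (if i = n-2 then g (n-1) else g i)" for i
    define A where "A i = (if i = n-2 then {g (n-2), g (n-1)} else {g i})" for i
    have key: "{g 0, g i} \<in> ET" if i: "1 \<le> i" "i < n - 1" and t: "is_tree VT ET" "subgraph VT ET V E"
      and v: "rep i \<in> VT" "y \<in> VT" "y \<notin> A i" for i VT ET y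
    proof -
      have F: "\<forall>p q. {p,q}\<in>E \<longrightarrow> p\<in>A i \<longrightarrow> q\<notin>A i \<longrightarrow> {p,q}\<in>{{g 0, g i}}"
      proof (intro allI impI)
        fix p q assume pq: "{p,q}\<in>E" "p\<in>A i" "q\<notin>A i"
        obtain j where j: "j < n" "q = g j" using vtx simple_edge[OF sg pq(1)] by blast
        show "{p,q}\<in>{{g 0, g i}}"
        proof (cases "i = n - 2")
          case False
          hence p: "p = g i" using pq unfolding A_def by auto
          have "{g i, g j} \<in> E" using pq j p by simp
          hence "j = 0" using edge[of i j] j i False by auto
          thus ?thesis using p j by auto
        next
          case True
          have jn: "j \<noteq> n-2" "j \<noteq> n-1" using pq j True unfolding A_def by auto
          show ?thesis
          proof (cases "p = g (n-2)")
            case True2: True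
            have "{g (n-2), g j} \<in> E" using pq j True2 by simp
            hence "j = 0" using edge[of "n-2" j] j jn n5 by auto
            thus ?thesis using True2 True j by auto
          next
            case False
            hence p: "p = g (n-1)" using pq True unfolding A_def by auto
            have "{g (n-1), g j} \<in> E" using pq j p by simp
            hence False using edge[of "n-1" j] j jn n5 by auto
            thus ?thesis ..
          qed
        qed
      qed
      have "rep i \<in> A i" unfolding rep_def A_def by auto
      from tree_cut[OF t v(1) v(2) this v(3) F] show ?thesis by auto
    qed
    define P where "P = (\<lambda>i. {g 0, g i}) ` {1..<n-1}"
    have PE: "P \<subseteq> E" unfolding P_def using edge by auto
    have cdiff: "c {g 0, g i} \<noteq> c {g 0, g j}" if ij: "i \<in> {1..<n-1}" "j \<in> {1..<n-1}" "i \<noteq> j" for i j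
    proof -
      have "card {rep i, rep j} \<le> k" using k card2[of "rep i" "rep j"] by linarith
      moreover have "{rep i, rep j} \<subseteq> V" using gV ij unfolding rep_def by auto
      ultimately obtain VT ET where T: "subgraph VT ET V E" "is_tree VT ET" "{rep i, rep j} \<subseteq> VT" "proper_edges c ET"
        using get_tree[OF kp finV] k n by blast
      have gij: "g i \<noteq> g j" "g i \<noteq> g 0" "g j \<noteq> g 0" using ginj ij by auto
      have nA: "rep j \<notin> A i" "rep i \<notin> A j" using ginj ij n5 unfolding rep_def A_def by auto
      have e1: "{g 0, g i}\<in>ET" by (rule key[OF _ _ T(2) T(1), of i "rep j"]) (use ij T(3) nA in auto)
      have e2: "{g 0, g j}\<in>ET" by (rule key[OF _ _ T(2) T(1), of j "rep i"]) (use ij T(3) nA in auto)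
      have "{g 0, g i} \<noteq> {g 0, g j}" using gij by (auto simp: doubleton_eq_iff)
      thus ?thesis using proper_use[OF T(4) e1 e2, of "g 0"] by simp
    qed
    have injP: "inj_on c P"
    proof (rule inj_onI)
      fix e f assume "e \<in> P" "f \<in> P" "c e = c f"
      then obtain i j where "i \<in> {1..<n-1}" "j \<in> {1..<n-1}" "e = {g 0, g i}" "f = {g 0, g j}" "c e = c f"
        unfolding P_def by blast
      thus "e = f" using cdiff by (cases "i = j") auto
    qed
    have "inj_on (\<lambda>i. {g 0, g i}) {1..<n-1}"
    proof (rule inj_onI)
      fix i j assume ij: "i \<in> {1..<n-1}" "j \<in> {1..<n-1}" "{g 0, g i} = {g 0, g j}"
      hence "g i = g j" using ginj[of i 0] ginj[of j 0] by (auto simp: doubleton_eq_iff)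
      thus "i = j" using ginj ij by auto
    qed
    hence cP: "card (c ` P) = n - 2" using injP unfolding P_def by (simp add: card_image)
    have finE: "finite E" by (rule simple_finE[OF sg])
    have "c ` P \<subseteq> c ` E" using PE by auto
    hence "card (c ` P) \<le> card (c ` E)" using finE by (intro card_mono) auto
    thus "n - 2 \<le> card (c ` E)" using cP by simp
  qed
  ultimately show ?thesis by simp
qed


lemma mk_iso:
  fixes f :: "'a \<Rightarrow> nat"
  assumes fin: "finite V" and n: "card V = n" and inj: "inj_on f V" and sub: "f ` V \<subseteq> {0..<n}"
    and ed: "\<forall>u\<in>V. \<forall>v\<in>V. {u,v}\<in>E \<longleftrightarrow> {f u, f v}\<in>E'"
  shows "graph_iso V E {0..<n} E'"
proof -
  have "card (f ` V) = card {0..<n}" using card_image[OF inj] n by simp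
  hence "f ` V = {0..<n}" using card_subset_eq[OF _ sub] by simp
  hence "bij_betw f V {0..<n}" using inj unfolding bij_betw_def by simp
  thus ?thesis unfolding graph_iso_def using ed by blast
qed

locale cls =
  fixes V :: "'a set" and E :: "'a set set" and n :: nat
  assumes sg: "simple_graph V E" and cg: "connected_graph V E" and n: "card V = n" and n5: "5 \<le> n"
  and noP5: "\<And>a b c d e. a\<in>V \<Longrightarrow> b\<in>V \<Longrightarrow> c\<in>V \<Longrightarrow> d\<in>V \<Longrightarrow> e\<in>V \<Longrightarrow> distinct [a,b,c,d,e] \<Longrightarrow>
      {a,b}\<in>E \<Longrightarrow> {b,c}\<in>E \<Longrightarrow> {c,d}\<in>E \<Longrightarrow> {d,e}\<in>E \<Longrightarrow> False"
  and noH: "\<And>x y l1 l2 m1 m2. x\<in>V \<Longrightarrow> y\<in>V \<Longrightarrow> l1\<in>V \<Longrightarrow> l2\<in>V \<Longrightarrow> m1\<in>V \<Longrightarrow> m2\<in>V \<Longrightarrow>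
      distinct [x,y,l1,l2,m1,m2] \<Longrightarrow>
      {x,y}\<in>E \<Longrightarrow> {x,l1}\<in>E \<Longrightarrow> {x,l2}\<in>E \<Longrightarrow> {y,m1}\<in>E \<Longrightarrow> {y,m2}\<in>E \<Longrightarrow> False"
begin

lemma finV: "finite V" using sg unfolding simple_graph_def by blast

lemma symE: "{a,b}\<in>E \<Longrightarrow> {b,a}\<in>E" by (simp add: insert_commute)

lemma edgeV: "{a,b}\<in>E \<Longrightarrow> a\<in>V \<and> b\<in>V \<and> a\<noteq>b" by (rule simple_edge[OF sg])

lemma extra4: "\<exists>w\<in>V. w \<notin> {a,b,c,d}"
proof (rule ccontr)
  assume "\<not> ?thesis"
  hence "V \<subseteq> {a,b,c,d}" by blast
  hence "card V \<le> card {a,b,c,d}" by (intro card_mono) auto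
  moreover have "card {a,b,c,d} \<le> 4"
  proof -
    have "card {a,b,c,d} \<le> Suc (card {b,c,d})" by (simp add: card_insert_if)
    thus ?thesis using card3[of b c d] by linarith
  qed
  ultimately show False using n n5 by linarith
qed

lemma case_R_empty:
  assumes c0: "c0\<in>V" and all: "\<forall>x\<in>V. x\<noteq>c0 \<longrightarrow> {c0,x}\<in>E"
  shows "(\<forall>e\<in>E. c0\<in>e) \<or> graph_iso V E {0..<n} (Splus_edges n)"
proof (cases "\<forall>e\<in>E. c0\<in>e")
  case True thus ?thesis by simp
next
  case False
  then obtain e1 where e1: "e1 \<in> E" "c0 \<notin> e1" by blast
  then obtain x y where xy: "e1 = {x,y}" using sg unfolding simple_graph_def by blast
  have exy: "{x,y}\<in>E" using e1 xy by simp
  have xyV: "x\<in>V" "y\<in>V" "x\<noteq>y" "x\<noteq>c0" "y\<noteq>c0" using edgeV[OF exy] e1 xy by auto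
  have share: False if st: "{s,t}\<in>E" and su: "{s,u}\<in>E" and tu: "t\<noteq>u" and ne: "s\<noteq>c0" "t\<noteq>c0" "u\<noteq>c0" for s t u
  proof -
    have v: "s\<in>V" "t\<in>V" "u\<in>V" "s\<noteq>t" "s\<noteq>u" using edgeV[OF st] edgeV[OF su] by auto
    obtain w where w: "w\<in>V" "w\<notin>{s,t,u,c0}" using extra4 by blast
    have "{u,s}\<in>E" using symE[OF su] .
    moreover have "{t,c0}\<in>E" using symE all v ne by blast
    moreover have "{c0,w}\<in>E" using all w by auto
    moreover have "distinct [u,s,t,c0,w]" using v ne w tu by auto
    ultimately show False using noP5[of u s t c0 w] st v w c0 by blast
  qed
  have disj: False if pq: "{p,q}\<in>E" and np: "p\<notin>{x,y}" "q\<notin>{x,y}" "p\<noteq>c0" "q\<noteq>c0" for p q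
  proof -
    have v: "p\<in>V" "q\<in>V" "p\<noteq>q" using edgeV[OF pq] by auto
    have "{y,x}\<in>E" using symE[OF exy] .
    moreover have "{x,c0}\<in>E" using symE all xyV by blast
    moreover have "{c0,p}\<in>E" using all v np by auto
    moreover have "distinct [y,x,c0,p,q]" using v np xyV by auto
    ultimately show False using noP5[of y x c0 p q] pq v xyV c0 by blast
  qed
  have claim: "{p,q} = {x,y}" if pq: "{p,q}\<in>E" and np: "p\<noteq>c0" "q\<noteq>c0" for p q
  proof -
    have pqn: "p \<noteq> q" using edgeV[OF pq] by auto
    show ?thesis
    proof (cases "p \<in> {x,y} \<or> q \<in> {x,y}")
      case False thus ?thesis using disj[OF pq] np by blast
    next
      case True
      show ?thesis
      proof (cases "p = x")
        case True
        show ?thesis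
        proof (cases "q = y")
          case True thus ?thesis using \<open>p = x\<close> by simp
        next
          case False thus ?thesis using share[of x q y] pq exy \<open>p = x\<close> np xyV by blast
        qed
      next
        case px: False
        show ?thesis
        proof (cases "p = y")
          case True
          show ?thesis
          proof (cases "q = x")
            case True thus ?thesis using \<open>p = y\<close> by (simp add: insert_commute)
          next
            case False thus ?thesis using share[of y q x] pq symE[OF exy] \<open>p = y\<close> np xyV by blast
          qed
        next
          case py: False
          hence q: "q = x \<or> q = y" using True px by blast
          thus ?thesis
          proof
            assume "q = x"
            thus ?thesis using share[of x p y] symE[OF pq] exy np xyV py by blast
          next
            assume "q = y"
            thus ?thesis using share[of y p x] symE[OF pq] symE[OF exy] np xyV px by blast
          qed
        qed
      qed
    qed
  qed
  have Echar: "{u,v}\<in>E \<longleftrightarrow> (u=c0 \<and> v\<noteq>c0) \<or> (v=c0 \<and> u\<noteq>c0) \<or> (u=x \<and> v=y) \<or> (u=y \<and> v=x)"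
    if uv: "u\<in>V" "v\<in>V" for u v
  proof
    assume e: "{u,v}\<in>E"
    have "u \<noteq> v" using edgeV[OF e] by auto
    show "(u=c0 \<and> v\<noteq>c0) \<or> (v=c0 \<and> u\<noteq>c0) \<or> (u=x \<and> v=y) \<or> (u=y \<and> v=x)"
    proof (cases "u = c0 \<or> v = c0")
      case True thus ?thesis using \<open>u \<noteq> v\<close> by blast
    next
      case False
      hence "{u,v} = {x,y}" using claim[OF e] by blast
      thus ?thesis by (auto simp: doubleton_eq_iff)
    qed
  next
    assume "(u=c0 \<and> v\<noteq>c0) \<or> (v=c0 \<and> u\<noteq>c0) \<or> (u=x \<and> v=y) \<or> (u=y \<and> v=x)"
    thus "{u,v}\<in>E" using all uv exy symE by auto
  qed
  let ?W = "V - {c0,x,y}"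
  have cW: "card ?W = card {3..<n}"
  proof -
    have "card {c0,x,y} = 3" using xyV by simp
    hence "card ?W = n - 3" using n c0 xyV finV by (subst card_Diff_subset) auto
    thus ?thesis by simp
  qed
  obtain h where h: "bij_betw h ?W {3..<n}" using finite_same_card_bij[OF _ _ cW] finV by auto
  define f where "f u = (if u = c0 then 0 else if u = x then 1 else if u = y then 2 else h u)" for u
  have hW: "u \<in> ?W \<Longrightarrow> h u \<in> {3..<n}" for u using bij_betw_apply[OF h] by blast
  have f0: "u\<in>V \<Longrightarrow> f u = 0 \<longleftrightarrow> u = c0" for u using hW[of u] unfolding f_def by auto
  have f1: "u\<in>V \<Longrightarrow> f u = 1 \<longleftrightarrow> u = x" for u using hW[of u] xyV unfolding f_def by auto
  have f2: "u\<in>V \<Longrightarrow> f u = 2 \<longleftrightarrow> u = y" for u using hW[of u] xyV unfolding f_def by auto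
  have fn: "u\<in>V \<Longrightarrow> f u < n" for u using hW[of u] n5 unfolding f_def by auto
  have inj: "inj_on f V"
  proof (rule inj_onI)
    fix u v assume uv: "u\<in>V" "v\<in>V" "f u = f v"
    show "u = v"
    proof (cases "u \<in> {c0,x,y} \<or> v \<in> {c0,x,y}")
      case True thus ?thesis using f0 f1 f2 uv xyV c0 by (metis insertE empty_iff)
    next
      case False
      hence "h u = h v" using uv unfolding f_def by auto
      thus ?thesis using bij_betw_imp_inj_on[OF h] uv False by (auto dest: inj_onD)
    qed
  qed
  have "\<forall>u\<in>V. \<forall>v\<in>V. {u,v}\<in>E \<longleftrightarrow> {f u, f v}\<in>Splus_edges n"
  proof (intro ballI)
    fix u v assume uv: "u\<in>V" "v\<in>V"
    show "{u,v}\<in>E \<longleftrightarrow> {f u, f v}\<in>Splus_edges n"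
      unfolding Echar[OF uv] splus_mem using f0[OF uv(1)] f0[OF uv(2)] f1[OF uv(1)] f1[OF uv(2)]
        f2[OF uv(1)] f2[OF uv(2)] fn[OF uv(1)] fn[OF uv(2)] by auto
  qed
  moreover have "f ` V \<subseteq> {0..<n}" using fn by auto
  ultimately show ?thesis using mk_iso[OF finV n inj] by blast
qed

end


context cls begin

lemma case_G0:
  assumes c0: "c0\<in>V" and Nd: "N = {v\<in>V. {c0,v}\<in>E}" and y: "y\<in>N" and r: "r\<in>V" "r\<notin>N" "r\<noteq>c0"
    and yr: "{y,r}\<in>E"
    and cl1: "\<forall>z\<in>N-{y}. \<forall>w. {z,w}\<in>E \<longrightarrow> w = c0"
    and cl2: "\<forall>w. {r,w}\<in>E \<longrightarrow> w = y"
    and yn: "\<forall>w. {y,w}\<in>E \<longrightarrow> w = c0 \<or> w = r"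
    and VN: "V = insert c0 (insert r N)"
  shows "graph_iso V E {0..<n} (G0_edges n)"
proof -
  have NV: "N \<subseteq> V" using Nd by auto
  have c0N: "c0 \<notin> N" using Nd edgeV by blast
  have finN: "finite N" using finV NV finite_subset by blast
  have "card V = card N + 2" using VN c0N r finN by (simp add: card_insert_if)
  hence cN: "card N = n - 2" using n by simp
  let ?W = "N - {y}"
  have cW: "card ?W = card {1..<n-2}" using cN y finN by (simp add: card_Diff_singleton)
  obtain h where h: "bij_betw h ?W {1..<n-2}" using finite_same_card_bij[OF _ _ cW] finN by auto
  define f where "f u = (if u = c0 then 0 else if u = y then n-2 else if u = r then n-1 else h u)" for u
  have hW: "u \<in> ?W \<Longrightarrow> h u \<in> {1..<n-2}" for u using bij_betw_apply[OF h] by blast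
  have yc: "y \<noteq> c0" "y \<noteq> r" using y c0N r by auto
  have uV: "u\<in>V \<Longrightarrow> u = c0 \<or> u = r \<or> u = y \<or> u \<in> ?W" for u using VN by auto
  have f0: "u\<in>V \<Longrightarrow> f u = 0 \<longleftrightarrow> u = c0" for u using hW[of u] uV[of u] yc n5 r unfolding f_def by auto
  have f1: "u\<in>V \<Longrightarrow> f u = n-2 \<longleftrightarrow> u = y" for u using hW[of u] uV[of u] yc n5 r unfolding f_def by auto
  have f2: "u\<in>V \<Longrightarrow> f u = n-1 \<longleftrightarrow> u = r" for u using hW[of u] uV[of u] yc n5 r unfolding f_def by auto
  have fN: "u\<in>V \<Longrightarrow> u \<in> N \<longleftrightarrow> 1 \<le> f u \<and> f u < n-1" for u
    using hW[of u] uV[of u] yc n5 r y c0N unfolding f_def by auto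
  have fn: "u\<in>V \<Longrightarrow> f u < n" for u using hW[of u] uV[of u] yc n5 r unfolding f_def by auto
  have inj: "inj_on f V"
  proof (rule inj_onI)
    fix u v assume uv: "u\<in>V" "v\<in>V" "f u = f v"
    show "u = v"
    proof (cases "u \<in> {c0,y,r} \<or> v \<in> {c0,y,r}")
      case True thus ?thesis using f0 f1 f2 uv yc c0 r y NV by (metis insertE empty_iff)
    next
      case False
      hence "u \<in> ?W" "v \<in> ?W" using uV uv by auto
      moreover hence "h u = h v" using uv False unfolding f_def by auto
      ultimately show ?thesis using bij_betw_imp_inj_on[OF h] by (auto dest: inj_onD)
    qed
  qed
  have Echar: "{u,v}\<in>E \<longleftrightarrow> (u=c0 \<and> v\<in>N) \<or> (v=c0 \<and> u\<in>N) \<or> (u=y \<and> v=r) \<or> (u=r \<and> v=y)"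
    if uv: "u\<in>V" "v\<in>V" for u v
  proof
    assume e: "{u,v}\<in>E"
    consider "u = c0" | "u = r" | "u = y" | "u \<in> ?W" using uV[OF uv(1)] by blast
    thus "(u=c0 \<and> v\<in>N) \<or> (v=c0 \<and> u\<in>N) \<or> (u=y \<and> v=r) \<or> (u=r \<and> v=y)"
    proof cases
      case 1 thus ?thesis using e uv Nd by auto
    next
      case 2 thus ?thesis using e cl2 by auto
    next
      case 3 thus ?thesis using e yn y by auto
    next
      case 4 thus ?thesis using e cl1 by auto
    qed
  next
    assume "(u=c0 \<and> v\<in>N) \<or> (v=c0 \<and> u\<in>N) \<or> (u=y \<and> v=r) \<or> (u=r \<and> v=y)"
    thus "{u,v}\<in>E" using Nd yr symE by auto
  qed
  have "\<forall>u\<in>V. \<forall>v\<in>V. {u,v}\<in>E \<longleftrightarrow> {f u, f v}\<in>G0_edges n"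
  proof (intro ballI)
    fix u v assume uv: "u\<in>V" "v\<in>V"
    show "{u,v}\<in>E \<longleftrightarrow> {f u, f v}\<in>G0_edges n"
      unfolding Echar[OF uv] g0_mem using f0[OF uv(1)] f0[OF uv(2)] f1[OF uv(1)] f1[OF uv(2)]
        f2[OF uv(1)] f2[OF uv(2)] fN[OF uv(1)] fN[OF uv(2)] n5 by auto
  qed
  moreover have "f ` V \<subseteq> {0..<n}" using fn by auto
  ultimately show ?thesis using mk_iso[OF finV n inj] by blast
qed

end


context cls begin

lemma classify: "(\<exists>c0\<in>V. (\<forall>x\<in>V. x\<noteq>c0 \<longrightarrow> {c0,x}\<in>E) \<and> (\<forall>e\<in>E. c0\<in>e)) \<or>
   graph_iso V E {0..<n} (Splus_edges n) \<or> graph_iso V E {0..<n} (G0_edges n)"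
proof -
  define nb where "nb x = {v\<in>V. {x,v}\<in>E}" for x
  have finnb: "finite (nb x)" for x using finV unfolding nb_def by simp
  have Vne: "V \<noteq> {}" using n n5 by auto
  define M where "M = Max ((\<lambda>x. card (nb x)) ` V)"
  have "M \<in> (\<lambda>x. card (nb x)) ` V" unfolding M_def using finV Vne by (intro Max_in) auto
  then obtain c0 where c0: "c0\<in>V" "card (nb c0) = M" by auto
  have maxd: "card (nb x) \<le> card (nb c0)" if "x\<in>V" for x
    unfolding c0(2) M_def using finV that by (intro Max_ge) auto
  define N where "N = nb c0"
  have Nd: "N = {v\<in>V. {c0,v}\<in>E}" unfolding N_def nb_def by simp
  have c0N: "c0 \<notin> N" using Nd edgeV by blast
  have finN: "finite N" unfolding N_def by (rule finnb)
  show ?thesis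
  proof (cases "V - N - {c0} = {}")
    case True
    hence all: "\<forall>x\<in>V. x\<noteq>c0 \<longrightarrow> {c0,x}\<in>E" using Nd by auto
    from case_R_empty[OF c0(1) all] all c0(1) show ?thesis by blast
  next
    case False
    then obtain r0 where r0: "r0\<in>V" "r0\<notin>N" "r0\<noteq>c0" by blast
    have "(\<lambda>a b. {a,b}\<in>E)\<^sup>*\<^sup>* c0 r0" using cg c0 r0 unfolding connected_graph_def by blast
    from rtranclp_cross[OF this, of "insert c0 N"] r0
    obtain a b where ab: "{a,b}\<in>E" "a\<in>insert c0 N" "b\<notin>insert c0 N" by auto
    have bV: "b\<in>V" "a\<in>V" "a\<noteq>b" using edgeV[OF ab(1)] by auto
    have "a \<noteq> c0" using ab bV Nd by auto
    hence y: "a\<in>N" using ab by simp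
    have r: "b\<in>V" "b\<notin>N" "b\<noteq>c0" using ab bV by auto
    have yc: "{c0,a}\<in>E" using y Nd by simp
    have ac: "a \<noteq> c0" using \<open>a \<noteq> c0\<close> .
    show ?thesis
    proof (cases "card N \<le> 2")
      case True
      have nby: "{c0,b} \<subseteq> nb a" using symE[OF yc] ab bV c0 unfolding nb_def by auto
      have c2: "card {c0,b} = 2" using r by simp
      hence "2 \<le> card (nb a)" using card_mono[OF finnb nby] by simp
      moreover have "card (nb a) \<le> card N" using maxd[of a] bV unfolding N_def by simp
      ultimately have cN: "card N = 2" "card (nb a) = 2" using True by linarith+
      have nbeq: "nb a = {c0,b}" using card_subset_eq[OF finnb nby] c2 cN by simp
      have "card (N - {a}) = 1" using cN y finN by (simp add: card_Diff_singleton)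
      then obtain y' where y': "y'\<in>N" "y'\<noteq>a" by (metis Diff_iff card_1_singletonE insertI1 singletonD)
      have "{a,y'} \<subseteq> N" using y y' by auto
      moreover have "card {a,y'} = 2" using y' by simp
      ultimately have Neq: "N = {a,y'}" using card_subset_eq[OF finN] cN by metis
      have y'V: "y'\<in>V" "{c0,y'}\<in>E" using y' Nd by auto
      obtain w where w: "w\<in>V" "w\<notin>{c0,a,y',b}" using extra4 by blast
      have "(\<lambda>a b. {a,b}\<in>E)\<^sup>*\<^sup>* c0 w" using cg c0 w unfolding connected_graph_def by blast
      from rtranclp_cross[OF this, of "{c0,a,y',b}"] w
      obtain p q where pq: "{p,q}\<in>E" "p\<in>{c0,a,y',b}" "q\<notin>{c0,a,y',b}" by auto
      have qV: "q\<in>V" "p \<noteq> q" using edgeV[OF pq(1)] by auto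
      have dd: "b \<noteq> y'" "c0 \<noteq> y'" "a \<noteq> y'" using r y' c0N by auto
      have False
      proof -
        consider "p = c0" | "p = a" | "p = y'" | "p = b" using pq(2) by blast
        thus False
        proof cases
          case 1 thus False using pq qV Nd Neq by auto
        next
          case 2
          hence "q \<in> nb a" using pq qV unfolding nb_def by auto
          thus False using nbeq pq by auto
        next
          case 3
          have "distinct [b,a,c0,y',q]" using dd pq r bV ac by auto
          thus False using noP5[of b a c0 y' q] symE[OF ab(1)] symE[OF yc] y'V pq 3 r bV c0 qV by blast
        next
          case 4
          have "distinct [q,b,a,c0,y']" using dd pq r bV ac by auto
          thus False using noP5[of q b a c0 y'] symE[OF ab(1)] symE[OF yc] y'V pq 4 r bV c0 qV symE[OF pq(1)] by blast
        qed
      qed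
      thus ?thesis ..
    next
      case False
      hence d3: "3 \<le> card N" by simp
      have exz: "\<exists>z\<in>N. z \<notin> S" if "finite S" "card S \<le> 2" for S
      proof (rule ccontr)
        assume "\<not> ?thesis"
        hence "N \<subseteq> S" by blast
        hence "card N \<le> card S" using that by (intro card_mono) auto
        thus False using that d3 by linarith
      qed
      have cl1: "\<forall>z\<in>N-{a}. \<forall>w. {z,w}\<in>E \<longrightarrow> w = c0"
      proof (intro ballI allI impI)
        fix z w assume z: "z\<in>N-{a}" and zw: "{z,w}\<in>E"
        have zV: "z\<in>V" "{c0,z}\<in>E" "z\<noteq>a" "z\<noteq>c0" "z\<noteq>b" using z Nd c0N r by auto
        have wV: "w\<in>V" "w\<noteq>z" using edgeV[OF zw] by auto
        obtain z' where z': "z'\<in>N" "z'\<notin>{a,z}" using exz[of "{a,z}"] card2[of a z] by auto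
        have z'V: "z'\<in>V" "{c0,z'}\<in>E" "z'\<noteq>c0" "z'\<noteq>b" using z' Nd c0N r by auto
        show "w = c0"
        proof (rule ccontr)
          assume wc: "w \<noteq> c0"
          show False
          proof (cases "w = b")
            case True
            have "distinct [z,b,a,c0,z']" using zV z'V z' ac bV r by auto
            thus False using noP5[of z b a c0 z'] zw True symE[OF ab(1)] symE[OF yc] z'V zV bV c0 by blast
          next
            case wb: False
            show False
            proof (cases "w = a")
              case True
              have "distinct [b,a,z,c0,z']" using zV z'V z' ac bV r by auto
              moreover have "{a,z}\<in>E" using symE[OF zw] True by simp
              ultimately show False using noP5[of b a z c0 z'] symE[OF ab(1)] symE[OF zV(2)] z'V zV bV c0 by blast
            next
              case False
              have "distinct [b,a,c0,z,w]" using zV wV wc wb False ac bV r by auto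
              thus False using noP5[of b a c0 z w] zw symE[OF ab(1)] symE[OF yc] zV wV bV c0 by blast
            qed
          qed
        qed
      qed
      obtain z1 where z1: "z1\<in>N" "z1\<noteq>a" using exz[of "{a}"] by auto
      obtain z2 where z2: "z2\<in>N" "z2\<notin>{a,z1}" using exz[of "{a,z1}"] card2[of a z1] by auto
      have z12: "z1\<in>V" "z2\<in>V" "{c0,z1}\<in>E" "{c0,z2}\<in>E" "z1\<noteq>c0" "z2\<noteq>c0" using z1 z2 Nd c0N by auto
      define Ry where "Ry = {v\<in>V. {a,v}\<in>E \<and> v\<noteq>c0}"
      have bRy: "b\<in>Ry" using ab r unfolding Ry_def by auto
      have RyN: "v\<notin>N \<and> v\<noteq>c0 \<and> v\<in>V \<and> v\<noteq>a" if v: "v\<in>Ry" for v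
      proof -
        have e: "{a,v}\<in>E" "v\<noteq>c0" "v\<in>V" using v unfolding Ry_def by auto
        have "v \<noteq> a" using edgeV[OF e(1)] by auto
        moreover have "v \<notin> N"
        proof
          assume "v\<in>N"
          hence "a = c0" using cl1 symE[OF e(1)] \<open>v \<noteq> a\<close> by blast
          thus False using ac by simp
        qed
        ultimately show ?thesis using e by auto
      qed
      have cl2: "\<forall>r1\<in>Ry. \<forall>w. {r1,w}\<in>E \<longrightarrow> w = a"
      proof (intro ballI allI impI)
        fix r1 w assume r1: "r1\<in>Ry" and rw: "{r1,w}\<in>E"
        have r1p: "r1\<notin>N" "r1\<noteq>c0" "r1\<in>V" "r1\<noteq>a" "{a,r1}\<in>E" using RyN[OF r1] r1 unfolding Ry_def by auto
        have wV: "w\<in>V" "w\<noteq>r1" using edgeV[OF rw] by auto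
        show "w = a"
        proof (rule ccontr)
          assume wa: "w \<noteq> a"
          show False
          proof (cases "w = c0")
            case True
            hence "r1 \<in> N" using symE[OF rw] Nd r1p by auto
            thus False using r1p by simp
          next
            case wc: False
            show False
            proof (cases "w \<in> N")
              case True
              hence "r1 = c0" using cl1 symE[OF rw] wa by blast
              thus False using r1p by simp
            next
              case False
              have "distinct [w,r1,a,c0,z1]" using wV wa wc False r1p z1 z12 ac by auto
              thus False using noP5[of w r1 a c0 z1] symE[OF rw] symE[OF r1p(5)] symE[OF yc] z12 wV r1p bV c0 by blast
            qed
          qed
        qed
      qed
      have VN: "V = insert c0 (N \<union> Ry)"
      proof (rule ccontr)
        assume "V \<noteq> insert c0 (N \<union> Ry)"
        moreover have "insert c0 (N \<union> Ry) \<subseteq> V" using c0 Nd RyN by auto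
        ultimately obtain v where v: "v\<in>V" "v\<notin>insert c0 (N \<union> Ry)" by blast
        have "(\<lambda>a b. {a,b}\<in>E)\<^sup>*\<^sup>* c0 v" using cg c0 v unfolding connected_graph_def by blast
        from rtranclp_cross[OF this, of "insert c0 (N \<union> Ry)"] v
        obtain p q where pq: "{p,q}\<in>E" "p\<in>insert c0 (N \<union> Ry)" "q\<notin>insert c0 (N \<union> Ry)" by auto
        have qV: "q\<in>V" using edgeV[OF pq(1)] by auto
        consider "p = c0" | "p \<in> N - {a}" | "p = a" | "p \<in> Ry" using pq(2) by blast
        thus False
        proof cases
          case 1 thus False using pq qV Nd by auto
        next
          case 2 thus False using cl1 pq by blast
        next
          case 3 thus False using pq qV unfolding Ry_def by auto
        next
          case 4 thus False using cl2 pq y by blast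
        qed
      qed
      show ?thesis
      proof (cases "\<exists>r2\<in>Ry. r2 \<noteq> b")
        case True
        then obtain r2 where r2: "r2\<in>Ry" "r2\<noteq>b" by blast
        have r2p: "r2\<notin>N" "r2\<noteq>c0" "r2\<in>V" "{a,r2}\<in>E" using RyN[OF r2(1)] r2 unfolding Ry_def by auto
        have "distinct [c0,a,z1,z2,b,r2]" using z1 z2 z12 r r2p r2 ac y c0N by auto
        hence False using noH[of c0 a z1 z2 b r2] c0 bV z12 r2p yc ab(1) by blast
        thus ?thesis ..
      next
        case False
        hence Ryb: "Ry = {b}" using bRy by blast
        have cl2': "\<forall>w. {b,w}\<in>E \<longrightarrow> w = a" using cl2 bRy by blast
        have yn: "\<forall>w. {a,w}\<in>E \<longrightarrow> w = c0 \<or> w = b"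
        proof (intro allI impI)
          fix w assume "{a,w}\<in>E"
          moreover hence "w\<in>V" using edgeV by blast
          ultimately show "w = c0 \<or> w = b" using Ryb unfolding Ry_def by blast
        qed
        have VN': "V = insert c0 (insert b N)" using VN Ryb by auto
        have "graph_iso V E {0..<n} (G0_edges n)"
          by (rule case_G0[OF c0(1) Nd y r ab(1) cl1 cl2' yn VN'])
        thus ?thesis by blast
      qed
    qed
  qed
qed

end


lemma star_px:
  assumes sg: "simple_graph V E" and cg: "connected_graph V E" and n: "card V = n" and n5: "5 \<le> n"
    and k: "3 \<le> k" "k \<le> n" and c0: "c0\<in>V" and all: "\<forall>x\<in>V. x\<noteq>c0 \<longrightarrow> {c0,x}\<in>E"
    and cen: "\<forall>e\<in>E. c0\<in>e"
  shows "n - 1 \<le> px k V E"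
proof (rule px_ge)
  have nn: "\<forall>v\<in>{c0}. \<exists>N. N \<subseteq> {c0} \<and> v \<notin> N \<and> 0 \<le> card N \<and> (\<forall>x\<in>N. {v,x} \<notin> {})" by auto
  have "0 + 1 \<le> card {c0}" "0 + 1 < n" using n5 by auto
  from seed_bound[OF sg cg n tr_single[of c0] _ _ this nn] c0
  show "\<exists>c. k_proper_coloring k V E c" by auto
next
  fix c assume kp: "k_proper_coloring k V E c"
  have finV: "finite V" using sg unfolding simple_graph_def by blast
  have Eeq: "E = (\<lambda>x. {c0,x}) ` (V - {c0})"
  proof
    show "E \<subseteq> (\<lambda>x. {c0,x}) ` (V - {c0})"
    proof
      fix e assume e: "e \<in> E"
      then obtain a b where ab: "a \<noteq> b" "e = {a,b}" "a\<in>V" "b\<in>V" using sg unfolding simple_graph_def by blast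
      have "c0 \<in> e" using cen e by blast
      hence "(a = c0 \<and> e = {c0,b} \<and> b \<noteq> c0) \<or> (b = c0 \<and> e = {c0,a} \<and> a \<noteq> c0)" using ab by (auto simp: insert_commute)
      thus "e \<in> (\<lambda>x. {c0,x}) ` (V - {c0})" using ab by auto
    qed
  next
    show "(\<lambda>x. {c0,x}) ` (V - {c0}) \<subseteq> E" using all by auto
  qed
  have pend: "{c0,x}\<in>ET" if x: "x\<in>V" "x\<noteq>c0" and t: "is_tree VT ET" "subgraph VT ET V E"
    and v: "x\<in>VT" "y\<in>VT" "y\<noteq>x" for x VT ET y
  proof -
    have "\<forall>p q. {p,q}\<in>E \<longrightarrow> p\<in>{x} \<longrightarrow> q\<notin>{x} \<longrightarrow> {p,q}\<in>{{c0,x}}"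
    proof (intro allI impI)
      fix p q assume pq: "{p,q}\<in>E" "p\<in>{x}" "q\<notin>{x}"
      have "c0 \<in> {p,q}" using cen pq(1) by (rule bspec)
      hence "q = c0" using pq x by auto
      thus "{p,q}\<in>{{c0,x}}" using pq by (auto simp: insert_commute)
    qed
    from tree_cut[OF t v(1) v(2) _ _ this] v show ?thesis by auto
  qed
  have injc: "inj_on c E"
  proof (rule inj_onI)
    fix e f assume ef: "e \<in> E" "f \<in> E" "c e = c f"
    then obtain x y where xy: "x\<in>V" "x\<noteq>c0" "y\<in>V" "y\<noteq>c0" "e = {c0,x}" "f = {c0,y}" using Eeq by auto
    show "e = f"
    proof (rule ccontr)
      assume "e \<noteq> f"
      hence "x \<noteq> y" using xy by auto
      have "card {x, y} \<le> k" using k card2[of x y] by linarith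
      moreover have "{x, y} \<subseteq> V" using xy by auto
      ultimately obtain VT ET where T: "subgraph VT ET V E" "is_tree VT ET" "{x, y} \<subseteq> VT" "proper_edges c ET"
        using get_tree[OF kp finV] k n by blast
      have e1: "{c0,x}\<in>ET" by (rule pend[OF _ _ T(2) T(1), of x y]) (use xy T(3) \<open>x\<noteq>y\<close> in auto)
      have e2: "{c0,y}\<in>ET" by (rule pend[OF _ _ T(2) T(1), of y x]) (use xy T(3) \<open>x\<noteq>y\<close> in auto)
      show False using proper_use[OF T(4) e1 e2, of c0] \<open>e \<noteq> f\<close> xy ef by simp
    qed
  qed
  have "inj_on (\<lambda>x. {c0,x}) (V - {c0})" by (rule inj_onI) (auto simp: doubleton_eq_iff)
  hence "card E = card (V - {c0})" unfolding Eeq by (simp add: card_image)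
  also have "\<dots> = n - 1" using n c0 finV by simp
  finally show "n - 1 \<le> card (c ` E)" using card_image[OF injc] by simp
qed

theorem mainTheorem17:
  fixes V :: "'a set" and E :: "'a set set" and n k :: nat
  assumes "simple_graph V E" and "connected_graph V E"
    and "card V = n" and "n \<ge> 5" and "3 \<le> k" and "k \<le> n"
  shows "px k V E = n - 2 \<longleftrightarrow>
    (graph_iso V E {0..<n} (Splus_edges n) \<or> graph_iso V E {0..<n} (G0_edges n))"
proof
  assume iso: "graph_iso V E {0..<n} (Splus_edges n) \<or> graph_iso V E {0..<n} (G0_edges n)"
  thus "px k V E = n - 2"
  proof
    assume "graph_iso V E {0..<n} (Splus_edges n)"
    from iso_inv[OF this] obtain g where "bij_betw g {0..<n} V" "\<forall>i<n. \<forall>j<n. {g i, g j} \<in> E \<longleftrightarrow> {i,j} \<in> Splus_edges n" by blast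
    from splus_px[OF assms(1,2,3,4,5,6) this] show ?thesis .
  next
    assume "graph_iso V E {0..<n} (G0_edges n)"
    from iso_inv[OF this] obtain g where "bij_betw g {0..<n} V" "\<forall>i<n. \<forall>j<n. {g i, g j} \<in> E \<longleftrightarrow> {i,j} \<in> G0_edges n" by blast
    from g0_px[OF assms(1,2,3,4,5,6) this] show ?thesis .
  qed
next
  assume px: "px k V E = n - 2"
  show "graph_iso V E {0..<n} (Splus_edges n) \<or> graph_iso V E {0..<n} (G0_edges n)"
  proof (rule ccontr)
    assume niso: "\<not> ?thesis"
    have small: False if "\<exists>col. k_proper_coloring k V E col \<and> card (col ` E) \<le> n - 3"
    proof -
      from that obtain col where "k_proper_coloring k V E col" "card (col ` E) \<le> n - 3" by blast
      from px_le[OF this] px assms(4) show False by linarith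
    qed
    have noP5: False if "a\<in>V" "b\<in>V" "c\<in>V" "d\<in>V" "e\<in>V" "distinct [a,b,c,d,e]"
      "{a,b}\<in>E" "{b,c}\<in>E" "{c,d}\<in>E" "{d,e}\<in>E" for a b c d e
    proof -
      have "4 < n" using assms(4) by simp
      from seed_P5[OF assms(1,2,3) this that] show False by (rule small)
    qed
    have noH: False if "x\<in>V" "y\<in>V" "l1\<in>V" "l2\<in>V" "m1\<in>V" "m2\<in>V" "distinct [x,y,l1,l2,m1,m2]"
      "{x,y}\<in>E" "{x,l1}\<in>E" "{x,l2}\<in>E" "{y,m1}\<in>E" "{y,m2}\<in>E" for x y l1 l2 m1 m2
    proof -
      have "4 < n" using assms(4) by simp
      from seed_H[OF assms(1,2,3) this that] show False by (rule small)
    qed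
    interpret cls V E n
      by (rule cls.intro[OF assms(1,2,3,4)]) (use noP5 noH in blast)+
    from classify niso obtain c0 where c0: "c0\<in>V" "\<forall>x\<in>V. x\<noteq>c0 \<longrightarrow> {c0,x}\<in>E" "\<forall>e\<in>E. c0\<in>e" by blast
    from star_px[OF assms(1,2,3,4,5,6) c0] px assms(4) show False by linarith
  qed
qed


end
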